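(* For $\theta\in(0,\pi/2)$ let $c_1(\theta)=\tfrac12-\tfrac{\theta}{\pi}$, $c_2(\theta)=\tfrac{\cot\theta}{\pi-2\theta}$, and $$\mu_n(\theta)=-\sqrt{\frac{\log(nc_1(\theta))}{c_2(\theta)}},\qquad [\sigma_n(\theta)]^2=\frac{-\log\log 2}{2c_2(\theta)\big(\log(nc_1(\theta))-\log\log 2\big)}.$$ (1) For each $\theta\in(0,\pi/2)$ there exists an integer $n^*(\theta)$ such that for all $n\ge n^*(\theta)$, all $m\in\{1,\dots,n\}$, all $\rho\in(0,1]$ and all $\alpha\in(0,1]$, $$p^{\mathrm{G}}_{\mathrm{success}}(n,m,\alpha,\rho)\ge p^{\mathrm{G}}_{\mathrm{success}}(n,1,\alpha,\rho)\ge\Phi\!\left(\frac{\Phi^{-1}(\alpha)-\rho\,\mu_n(\theta)}{\sqrt{1-\rho^2+\rho^2[\sigma_n(\theta)]^2}}\right).$$ (2) Consequently, taking for each $\theta$ the least such integer $n^*(\theta)$ and setting $\Theta_n=\{\theta\in(0,\pi/2):n\ge n^*(\theta)\}$, for every $n\in\mathbb N$, $m\in\{1,\dots,n\}$, $\rho\in(0,1]$, $\alpha\in(0,1]$, $$p^{\mathrm{G}}_{\mathrm{success}}(n,m,\alpha,\rho)\ge p^{\mathrm{G}}_{\mathrm{success}}(n,1,\alpha,\rho)\ge\sup_{\theta\in\Theta_n}\Phi\!\left(\frac{\Phi^{-1}(\alpha)-\rho\,\mu_n(\theta)}{\sqrt{1-\rho^2+\rho^2[\sigma_n(\theta)]^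2}}\right).$$
   Context: Ordinal optimisation model: let $(Z_1,X_1),\dots,(Z_n,X_n)$ be i.i.d. copies of a pair $(Z,X)$ of real random variables. Order $Z_1,\dots,Z_n$ increasingly as $Z_{1:n}\le\dots\le Z_{n:n}$ and let $X_{\langle i\rangle}$ denote the $X$-value paired with $Z_{i:n}$. Let $x^*_\alpha$ be the $\alpha$-quantile of $X$. The success probability is $\Pr(\min_{1\le i\le m}X_{\langle i\rangle}\le x^*_\alpha)$. Gaussian copula model with correlation $\rho$: $Z,X$ have continuous marginal CDFs $F_Z,F_X$ and joint CDF $\boldsymbol\Phi_{\rho}(\Phi^{-1}(F_Z(z)),\Phi^{-1}(F_X(x)))$, with $\Phi$ the standard normal CDF and $\boldsymbol\Phi_\rho$ the standard bivariate normal CDF with correlation $\rho$. The success probability in this model is $p^{\mathrm{G}}_{\mathrm{success}}(n,m,\alpha,\rho)$. $\log$ is the natural logarithm. *)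

theory Defs
  imports "HOL-Probability.Probability"
begin

definition std_normal :: "real measure" where
  "std_normal = density lborel std_normal_density"

definition Phi :: "real \<Rightarrow> real" where
  "Phi x = measure std_normal {..x}"

text \<open>Quantile function, used only for 0 < alpha < 1 (where it is the unique solution).\<close>
definition Phi_inv :: "real \<Rightarrow> real" where
  "Phi_inv a = (THE x. Phi x = a)"

text \<open>Gaussian copula model with correlation rho.  The success probability depends only
  on the copula (it is invariant under strictly increasing transformations of Z and X),
  so we realise the model with standard normal marginals:
  Z = U, X = rho U + sqrt(1 - rho^2) V with U, V i.i.d. standard normal
  (this also covers the degenerate case rho = 1).\<close>

definition pair_measure_UV :: "(real \<times> real) measure" where
  "pair_measure_UV = std_normal \<Otimes>\<^sub>M std_normal"

definition Zval :: "real \<times> real \<Rightarrow> real" where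
  "Zval uv = fst uv"

definition Xval :: "real \<Rightarrow> real \<times> real \<Rightarrow> real" where
  "Xval \<rho> uv = \<rho> * fst uv + sqrt (1 - \<rho>\<^sup>2) * snd uv"

definition sample_space :: "nat \<Rightarrow> (nat \<Rightarrow> real \<times> real) measure" where
  "sample_space n = PiM {..<n} (\<lambda>_. pair_measure_UV)"

text \<open>Success event: min over the m pairs with the smallest Z-values of the X-values is
  at most the alpha-quantile of X.  Index i is among the m smallest Z-values iff fewer than
  m indices j have strictly smaller Z (ties have probability zero).  For X standard normal,
  X <= x*_alpha iff Phi X <= alpha (for alpha = 1 the quantile is +infinity and the
  condition is always true).\<close>

definition p_success_G :: "nat \<Rightarrow> nat \<Rightarrow> real \<Rightarrow> real \<Rightarrow> real" where
  "p_success_G n m \<alpha> \<rho> = measure (sample_space n)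
     {\<omega> \<in> space (sample_space n).
        \<exists>i<n. card {j \<in> {..<n}. Zval (\<omega> j) < Zval (\<omega> i)} < m
              \<and> Phi (Xval \<rho> (\<omega> i)) \<le> \<alpha>}"

definition c1 :: "real \<Rightarrow> real" where
  "c1 \<theta> = 1/2 - \<theta> / pi"

definition c2 :: "real \<Rightarrow> real" where
  "c2 \<theta> = cot \<theta> / (pi - 2 * \<theta>)"

definition mu_n :: "nat \<Rightarrow> real \<Rightarrow> real" where
  "mu_n n \<theta> = - sqrt (ln (real n * c1 \<theta>) / c2 \<theta>)"

definition sigma2_n :: "nat \<Rightarrow> real \<Rightarrow> real" where
  "sigma2_n n \<theta> = - ln (ln 2) / (2 * c2 \<theta> * (ln (real n * c1 \<theta>) - ln (ln 2)))"

text \<open>The lower bound Phi((Phi^{-1}(alpha) - rho mu_n)/sqrt(1 - rho^2 + rho^2 sigma_n^2)).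
  For alpha = 1 we have Phi^{-1}(1) = +infinity and the bound equals 1.\<close>
definition gauss_bound :: "nat \<Rightarrow> real \<Rightarrow> real \<Rightarrow> real \<Rightarrow> real" where
  "gauss_bound n \<theta> \<alpha> \<rho> =
     (if \<alpha> \<ge> 1 then 1
      else Phi ((Phi_inv \<alpha> - \<rho> * mu_n n \<theta>) / sqrt (1 - \<rho>\<^sup>2 + \<rho>\<^sup>2 * sigma2_n n \<theta>)))"

definition good_threshold :: "real \<Rightarrow> nat \<Rightarrow> bool" where
  "good_threshold \<theta> n0 \<longleftrightarrow>
     (\<forall>n\<ge>n0. \<forall>m\<in>{1..n}. \<forall>\<rho>\<in>{0<..1}. \<forall>\<alpha>\<in>{0<..1}.
        p_success_G n 1 \<alpha> \<rho> \<le> p_success_G n m \<alpha> \<rho> \<and>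
        gauss_bound n \<theta> \<alpha> \<rho> \<le> p_success_G n 1 \<alpha> \<rho>)"

definition n_star :: "real \<Rightarrow> nat" where
  "n_star \<theta> = (LEAST n0. good_threshold \<theta> n0)"

definition Theta_n :: "nat \<Rightarrow> real set" where
  "Theta_n n = {\<theta>. 0 < \<theta> \<and> \<theta> < pi/2 \<and> n \<ge> n_star \<theta>}"

end

theory Submission
  imports Defs "HOL-Real_Asymp.Real_Asymp"
begin

lemma N_prob: "prob_space std_normal"
  using real_dist_normal_dist unfolding std_normal_def real_distribution_def by blast

interpretation N: prob_space std_normal by (rule N_prob)

lemma sets_N[simp, measurable_cong]: "sets std_normal = sets borel"
  unfolding std_normal_def by simp

lemma space_N[simp]: "space std_normal = UNIV"
  unfolding std_normal_def by simp

lemma N_real_distribution: "real_distribution std_normal"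
  unfolding real_distribution_def real_distribution_axioms_def
  using N_prob by simp

lemma Phi_cdf: "Phi = cdf std_normal"
  by (auto simp: Phi_def cdf_def)

lemma emeasure_N: "A \<in> sets borel \<Longrightarrow>
  emeasure std_normal A = (\<integral>\<^sup>+ x. ennreal (std_normal_density x) * indicator A x \<partial>lborel)"
  unfolding std_normal_def by (subst emeasure_density) auto

lemma N_finite[simp]: "emeasure std_normal A \<noteq> \<top>"
  using N.emeasure_finite by simp

lemma emeasure_N_measure: "emeasure std_normal A = ennreal (measure std_normal A)"
  using N_finite emeasure_eq_ennreal_measure by blast

lemma N_singleton: "measure std_normal {x} = 0"
proof -
  have "emeasure std_normal {x} = (\<integral>\<^sup>+ u. ennreal (std_normal_density u) * indicator {x} u \<partial>lborel)"
    by (rule emeasure_N) simp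
  also have "\<dots> = (\<integral>\<^sup>+ (u::real). 0 \<partial>lborel)"
    using AE_lborel_singleton[of x] by (intro nn_integral_cong_AE) (auto elim!: eventually_mono)
  finally show ?thesis by (simp add: measure_def)
qed

lemma Phi_cont: "isCont Phi x"
  unfolding Phi_cdf using finite_borel_measure.isCont_cdf[of std_normal x] N_singleton
    real_distribution.finite_borel_measure_M[OF N_real_distribution] by simp

lemma Phi_mono: "x \<le> y \<Longrightarrow> Phi x \<le> Phi y"
  unfolding Phi_cdf using finite_borel_measure.cdf_nondecreasing
    real_distribution.finite_borel_measure_M[OF N_real_distribution] by blast

lemma Phi_le1: "Phi x \<le> 1"
  unfolding Phi_cdf using real_distribution.cdf_bounded_prob[OF N_real_distribution] by blast

lemma Phi_nonneg: "0 \<le> Phi x"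
  unfolding Phi_def by simp

lemma Phi_top: "(Phi \<longlongrightarrow> 1) at_top"
  unfolding Phi_cdf using real_distribution.cdf_lim_at_top_prob[OF N_real_distribution] .

lemma Phi_bot: "(Phi \<longlongrightarrow> 0) at_bot"
  unfolding Phi_cdf using finite_borel_measure.cdf_lim_at_bot
    real_distribution.finite_borel_measure_M[OF N_real_distribution] by blast

lemma density_bound_interval:
  assumes "a \<le> b" "0 \<le> m" "\<And>x. a \<le> x \<Longrightarrow> x \<le> b \<Longrightarrow> m \<le> std_normal_density x"
  shows "(b - a) * m \<le> measure std_normal {a..b}"
proof -
  have "ennreal ((b - a) * m) = (\<integral>\<^sup>+ u. ennreal m * indicator {a..b} u \<partial>lborel)"
    using assms by (simp add: nn_integral_cmult_indicator ennreal_mult mult.commute)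
  also have "\<dots> \<le> (\<integral>\<^sup>+ u. ennreal (std_normal_density u) * indicator {a..b} u \<partial>lborel)"
    by (rule nn_integral_mono) (auto simp: indicator_def assms(3))
  also have "\<dots> = emeasure std_normal {a..b}" by (rule emeasure_N[symmetric]) simp
  finally show ?thesis using assms by (simp add: emeasure_N_measure)
qed

lemma snd_decr: "\<bar>x\<bar> \<le> \<bar>y\<bar> \<Longrightarrow> std_normal_density y \<le> std_normal_density x"
  unfolding std_normal_density_def
  by (auto intro!: mult_left_mono divide_right_mono simp: abs_le_square_iff)

lemma Phi_strict: assumes "x < y" shows "Phi x < Phi y"
proof -
  let ?m = "min (std_normal_density x) (std_normal_density y)"
  have m: "0 < ?m" by (simp add: normal_density_pos)
  have "\<And>u. x \<le> u \<Longrightarrow> u \<le> y \<Longrightarrow> ?m \<le> std_normal_density u"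
  proof -
    fix u assume "x \<le> u" "u \<le> y"
    then have "\<bar>u\<bar> \<le> \<bar>x\<bar> \<or> \<bar>u\<bar> \<le> \<bar>y\<bar>" by auto
    then show "?m \<le> std_normal_density u" using snd_decr by (meson min.coboundedI1 min.coboundedI2)
  qed
  then have "(y - x) * ?m \<le> measure std_normal {x..y}"
    using assms m by (intro density_bound_interval) auto
  also have "measure std_normal {x..y} = measure std_normal {x<..y}"
  proof -
    have "{x..y} = {x} \<union> {x<..y}" using assms by auto
    then have "measure std_normal {x..y} \<le> measure std_normal {x} + measure std_normal {x<..y}"
      using measure_subadditive[of "{x}" std_normal "{x<..y}"] by simp
    moreover have "measure std_normal {x<..y} \<le> measure std_normal {x..y}"
      by (rule N.finite_measure_mono) auto
    ultimately show ?thesis using N_singleton by simp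
  qed
  also have "\<dots> = Phi y - Phi x"
    unfolding Phi_cdf using finite_borel_measure.cdf_diff_eq[of std_normal x y] assms
      real_distribution.finite_borel_measure_M[OF N_real_distribution] by simp
  finally show ?thesis using assms m
    by (smt (verit) mult_pos_pos)
qed


lemma N_Ici_eq_Ioi: "measure std_normal {x..} = measure std_normal {x<..}"
proof -
  have "measure std_normal {x..} \<le> measure std_normal {x} + measure std_normal {x<..}"
    using measure_subadditive[of "{x}" std_normal "{x<..}"] ivl_disj_un_singleton(1)[of x] by simp
  moreover have "measure std_normal {x<..} \<le> measure std_normal {x..}"
    by (rule N.finite_measure_mono) auto
  ultimately show ?thesis using N_singleton by simp
qed

lemma N_Iio_eq_Iic: "measure std_normal {..<x} = measure std_normal {..x}"
proof -
  have "measure std_normal {..x} \<le> measure std_normal {x} + measure std_normal {..<x}"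
    using measure_subadditive[of "{..<x}" std_normal "{x}"] ivl_disj_un_singleton(2)[of x] by (simp add: add.commute)
  moreover have "measure std_normal {..<x} \<le> measure std_normal {..x}"
    by (rule N.finite_measure_mono) auto
  ultimately show ?thesis using N_singleton by simp
qed

lemma N_Ioi: "measure std_normal {x<..} = 1 - Phi x"
proof -
  have "measure std_normal {x<..} = measure std_normal (space std_normal - {..x})"
    by (rule arg_cong[where f="measure std_normal"]) auto
  also have "\<dots> = 1 - Phi x" unfolding Phi_def by (rule N.prob_compl) simp
  finally show ?thesis .
qed

lemma N_reflect: "measure std_normal {..-x} = measure std_normal {x..}"
proof -
  have "emeasure std_normal {..-x} = (\<integral>\<^sup>+ u. ennreal (std_normal_density u) * indicator {..-x} u \<partial>lborel)"
    by (rule emeasure_N) simp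
  also have "\<dots> = ennreal \<bar>-1\<bar> * (\<integral>\<^sup>+ u. ennreal (std_normal_density (0 + -1*u)) * indicator {..-x} (0 + -1*u) \<partial>lborel)"
    by (rule nn_integral_real_affine) auto
  also have "\<dots> = (\<integral>\<^sup>+ u. ennreal (std_normal_density u) * indicator {x..} u \<partial>lborel)"
    by (auto intro!: nn_integral_cong simp: std_normal_density_def indicator_def)
  also have "\<dots> = emeasure std_normal {x..}" by (rule emeasure_N[symmetric]) simp
  finally show ?thesis by (simp add: emeasure_N_measure)
qed

lemma Phi_neg: "Phi (-x) = 1 - Phi x"
  using N_reflect[of x] N_Ici_eq_Ioi[of x] N_Ioi[of x] by (simp add: Phi_def)

lemma Phi_0: "Phi 0 = 1/2"
  using Phi_neg[of 0] by simp

lemma Phi_neg_le_half: "0 \<le> z \<Longrightarrow> Phi (-z) \<le> 1/2"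
  using Phi_mono[of "-z" 0] Phi_0 by simp

lemma Phi_surj: assumes "0 < a" "a < 1" shows "\<exists>x. Phi x = a"
proof -
  have "eventually (\<lambda>x. Phi x > a) at_top"
    using Phi_top assms by (simp add: order_tendsto_iff)
  then obtain b where b: "Phi b > a" by (auto simp: eventually_at_top_linorder)
  have "eventually (\<lambda>x. Phi x < a) at_bot"
    using Phi_bot assms by (simp add: order_tendsto_iff)
  then obtain c where c0: "\<And>x. x \<le> c \<Longrightarrow> Phi x < a" by (auto simp: eventually_at_bot_linorder)
  define c' where "c' = min c b"
  have c: "Phi c' < a" using c0 by (simp add: c'_def)
  have "\<exists>x. c' \<le> x \<and> x \<le> b \<and> Phi x = a"
    by (rule IVT) (use b c Phi_cont in \<open>auto simp: c'_def\<close>)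
  then show ?thesis by blast
qed

lemma Phi_inj: "Phi x = Phi y \<Longrightarrow> x = y"
  using Phi_strict by (metis linorder_neqE_linordered_idom order_less_irrefl)

lemma Phi_Phi_inv: assumes "0 < a" "a < 1" shows "Phi (Phi_inv a) = a"
proof -
  obtain x where x: "Phi x = a" using Phi_surj[OF assms] by blast
  have "Phi_inv a = x" unfolding Phi_inv_def
    by (rule the_equality) (use x Phi_inj in auto)
  then show ?thesis using x by simp
qed

lemma Phi_upper_tail: assumes "0 \<le> x" shows "Phi (-x) \<le> exp (- x\<^sup>2 / 2)"
proof -
  have "emeasure std_normal {..-x} = (\<integral>\<^sup>+ u. ennreal (std_normal_density u) * indicator {..-x} u \<partial>lborel)"
    by (rule emeasure_N) simp
  also have "\<dots> \<le> (\<integral>\<^sup>+ u. ennreal (exp (- x\<^sup>2 / 2)) * ennreal (normal_density (-x) 1 u) \<partial>lborel)"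
  proof (rule nn_integral_mono)
    fix u :: real
    show "ennreal (std_normal_density u) * indicator {..-x} u \<le> ennreal (exp (- x\<^sup>2 / 2)) * ennreal (normal_density (-x) 1 u)"
    proof (cases "u \<le> -x")
      case True
      have "- u\<^sup>2 / 2 \<le> - x\<^sup>2 / 2 + (-(u - -x)\<^sup>2 / 2)"
      proof -
        have "x * (x + u) \<le> 0" using True assms by (intro mult_nonneg_nonpos) auto
        then show ?thesis by (simp add: power2_eq_square algebra_simps)
      qed
      then have "exp (- u\<^sup>2 / 2) \<le> exp (- x\<^sup>2 / 2) * exp (-(u - -x)\<^sup>2 / 2)"
        by (simp add: exp_add[symmetric])
      then have "std_normal_density u \<le> exp (- x\<^sup>2 / 2) * normal_density (-x) 1 u"
        by (simp add: std_normal_density_def normal_density_def divide_right_mono)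
      then show ?thesis using True by (simp add: ennreal_mult[symmetric] ennreal_leI)
    qed simp
  qed
  also have "\<dots> = ennreal (exp (- x\<^sup>2 / 2)) * (\<integral>\<^sup>+ u. ennreal (normal_density (-x) 1 u) \<partial>lborel)"
    by (rule nn_integral_cmult) simp
  also have "(\<integral>\<^sup>+ u. ennreal (normal_density (-x) 1 u) \<partial>lborel) = 1"
    by (subst nn_integral_eq_integral) auto
  finally show ?thesis by (simp add: emeasure_N_measure Phi_def)
qed

lemma Phi_lower_tail: assumes "0 \<le> x" shows "exp (- (x + 1)\<^sup>2 / 2) / sqrt (2 * pi) \<le> Phi (-x)"
proof -
  have "((-x) - (-x-1)) * std_normal_density (x+1) \<le> measure std_normal {-x-1..-x}"
    by (rule density_bound_interval) (use assms in \<open>auto intro!: snd_decr simp: normal_density_nonneg\<close>)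
  also have "\<dots> \<le> Phi (-x)" unfolding Phi_def by (rule N.finite_measure_mono) auto
  finally show ?thesis by (simp add: std_normal_density_def)
qed


lemma pow_le_exp: assumes "0 \<le> p" "p \<le> 1" shows "(1 - p) ^ n \<le> exp (- (real n * p))"
proof -
  have "(1 - p) ^ n \<le> exp (- p) ^ n"
    by (rule power_mono) (use assms exp_ge_add_one_self[of "-p"] in auto)
  also have "\<dots> = exp (- (real n * p))" by (simp add: exp_of_nat_mult[symmetric])
  finally show ?thesis .
qed

lemma one_minus_exp: fixes z :: real assumes "0 \<le> z" shows "z / (1 + z) \<le> 1 - exp (- z)"
proof -
  have "1 + z \<le> exp z" by simp
  then have "exp (- z) \<le> 1 / (1 + z)"
    using assms by (simp add: exp_minus field_simps)
  then show ?thesis using assms by (simp add: field_simps)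
qed

lemma young: fixes p q e :: real assumes "0 < e" shows "(p + q)\<^sup>2 \<le> (1 + e) * p\<^sup>2 + (1 + 1/e) * q\<^sup>2"
proof -
  have "0 \<le> (e * p - q)\<^sup>2 / e" using assms by simp
  then have "2 * p * q \<le> e * p\<^sup>2 + q\<^sup>2 / e"
    using assms by (simp add: power2_eq_square field_simps)
  then show ?thesis by (simp add: power2_eq_square field_simps)
qed

lemma dom_core:
  fixes n :: nat and r \<sigma> e :: real
  assumes n1: "n \<ge> 1" and r: "0 \<le> r" and sg: "0 < \<sigma>" and e: "0 < e"
    and Hk: "1 + 1/e \<le> 1/\<sigma>\<^sup>2"
    and HA: "2 * sqrt (2*pi) * exp ((1 + e) * (r + 1)\<^sup>2 / 2) \<le> real n"
    and HB1: "(r/\<sigma> + 1)\<^sup>2 / 2 + ln (sqrt (2*pi)) \<le> real n * exp (- (r + 1)\<^sup>2 / 2) / sqrt (2*pi)"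
    and HB2: "2 / \<sigma>\<^sup>2 \<le> real n / 4"
    and HB3: "2 * r\<^sup>2 / \<sigma>\<^sup>2 + 1 + ln (sqrt (2*pi)) \<le> real n * ln 2 / 2"
  shows "Phi ((t + r) / \<sigma>) \<le> 1 - (1 - Phi t) ^ n"
proof -
  have sp: "sqrt (2*pi) > 0" by simp
  have lsp: "exp (ln (sqrt (2*pi))) = sqrt (2*pi)" by simp
  show ?thesis
  proof (cases "t \<le> -r")
    case True
    define y where "y = -(t + r)"
    have y: "0 \<le> y" using True by (simp add: y_def)
    have G: "Phi ((t + r) / \<sigma>) = Phi (- (y/\<sigma>))" by (rule arg_cong[where f=Phi]) (use sg in \<open>simp add: y_def field_simps\<close>)
    define z where "z = real n * Phi t"
    have z0: "0 \<le> z" by (simp add: z_def Phi_nonneg)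
    have F: "z / (1 + z) \<le> 1 - (1 - Phi t) ^ n"
      using pow_le_exp[of "Phi t" n] Phi_nonneg Phi_le1 one_minus_exp[OF z0] by (simp add: z_def)
    show ?thesis
    proof (cases "z \<ge> 1")
      case True
      then have "1/2 \<le> z / (1 + z)" by (simp add: field_simps)
      moreover have "Phi (- (y/\<sigma>)) \<le> 1/2" using Phi_neg_le_half y sg by simp
      ultimately show ?thesis using F G by linarith
    next
      case False
      then have "z * z \<le> z * 1" using z0 by (intro mult_left_mono) auto
      then have zz: "z / 2 \<le> z / (1 + z)" using z0 by (simp add: field_simps)
      have t: "t = - (r + y)" by (simp add: y_def)
      have Pt: "exp (- (r + y + 1)\<^sup>2 / 2) / sqrt (2 * pi) \<le> Phi t"
        using Phi_lower_tail[of "r + y"] r y t by simp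
      have yo: "(r + 1 + y)\<^sup>2 \<le> (1 + e) * (r + 1)\<^sup>2 + (1 + 1/e) * y\<^sup>2" by (rule young[OF e])
      have "(1 + 1/e) * y\<^sup>2 \<le> y\<^sup>2 / \<sigma>\<^sup>2"
        using mult_right_mono[OF Hk, of "y\<^sup>2"] by simp
      have q1: "(r + y + 1)\<^sup>2 = (r + 1 + y)\<^sup>2" by (simp add: add_ac)
      have q2: "(y / \<sigma>)\<^sup>2 = y\<^sup>2 / \<sigma>\<^sup>2" by (simp add: power_divide)
      have "(r + y + 1)\<^sup>2 \<le> (1 + e) * (r + 1)\<^sup>2 + (y / \<sigma>)\<^sup>2"
        using yo q1 q2 \<open>(1 + 1/e) * y\<^sup>2 \<le> y\<^sup>2 / \<sigma>\<^sup>2\<close> by linarith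
      then have ex: "- (r + y + 1)\<^sup>2 / 2 \<ge> - (1 + e) * (r + 1)\<^sup>2 / 2 - (y / \<sigma>)\<^sup>2 / 2"
        by (simp add: field_simps)
      have "exp (- (y/\<sigma>)\<^sup>2 / 2) = exp ((1 + e) * (r + 1)\<^sup>2 / 2) * exp (- (1 + e) * (r + 1)\<^sup>2 / 2 - (y / \<sigma>)\<^sup>2 / 2)"
        by (simp add: exp_add[symmetric] field_simps)
      also have "\<dots> \<le> exp ((1 + e) * (r + 1)\<^sup>2 / 2) * exp (- (r + y + 1)\<^sup>2 / 2)"
        using ex by (intro mult_left_mono) auto
      also have "\<dots> \<le> real n / (2 * sqrt (2 * pi)) * exp (- (r + y + 1)\<^sup>2 / 2)"
        using HA by (intro mult_right_mono) (auto simp: field_simps)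
      also have "\<dots> = real n * (exp (- (r + y + 1)\<^sup>2 / 2) / sqrt (2 * pi)) / 2" by simp
      also have "\<dots> \<le> real n * Phi t / 2"
        using Pt by (intro divide_right_mono mult_left_mono) auto
      finally have "exp (- (y/\<sigma>)\<^sup>2 / 2) \<le> z / 2" by (simp add: z_def)
      moreover have "Phi (- (y/\<sigma>)) \<le> exp (- (y/\<sigma>)\<^sup>2 / 2)"
        using Phi_upper_tail[of "y/\<sigma>"] y sg by simp
      ultimately show ?thesis using F G zz by linarith
    qed
  next
    case False
    define y where "y = t + r"
    have y: "0 \<le> y" using False by (simp add: y_def)
    have R: "exp (- (y/\<sigma> + 1)\<^sup>2 / 2) / sqrt (2 * pi) \<le> Phi (- (y/\<sigma>))"
      using Phi_lower_tail[of "y/\<sigma>"] y sg by simp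
    have G: "Phi ((t + r) / \<sigma>) = 1 - Phi (- (y/\<sigma>))" by (simp add: y_def Phi_neg)
    have key: "(1 - Phi t) ^ n \<le> exp (- (y/\<sigma> + 1)\<^sup>2 / 2) / sqrt (2 * pi)"
    proof (cases "t \<le> 0")
      case True
      have "exp (- (- t + 1)\<^sup>2 / 2) / sqrt (2 * pi) \<le> Phi t"
        using Phi_lower_tail[of "-t"] True by simp
      moreover have "exp (- (r + 1)\<^sup>2 / 2) \<le> exp (- (- t + 1)\<^sup>2 / 2)"
        using True False by (simp add: power_mono)
      ultimately have Pt: "exp (- (r + 1)\<^sup>2 / 2) / sqrt (2 * pi) \<le> Phi t"
        by (smt (verit) divide_right_mono sp)
      have "(1 - Phi t) ^ n \<le> exp (- (real n * Phi t))"
        using pow_le_exp Phi_nonneg Phi_le1 by blast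
      also have "\<dots> \<le> exp (- (real n * (exp (- (r + 1)\<^sup>2 / 2) / sqrt (2 * pi))))"
        using mult_left_mono[OF Pt, of "real n"] by simp
      also have "\<dots> \<le> exp (- ((r/\<sigma> + 1)\<^sup>2 / 2 + ln (sqrt (2*pi))))"
        using HB1 by simp
      also have "\<dots> = exp (- (r/\<sigma> + 1)\<^sup>2 / 2) / sqrt (2 * pi)"
        by (simp add: exp_diff)
      also have "\<dots> \<le> exp (- (y/\<sigma> + 1)\<^sup>2 / 2) / sqrt (2 * pi)"
      proof -
        have "y / \<sigma> \<le> r / \<sigma>" using True sg by (simp add: y_def divide_right_mono)
        then have "(y/\<sigma> + 1)\<^sup>2 \<le> (r/\<sigma> + 1)\<^sup>2" using y sg by (intro power_mono) auto
        then show ?thesis by (intro divide_right_mono) auto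
      qed
      finally show ?thesis .
    next
      case t0: False
      define w where "w = exp (- ln 2 / 2 - t\<^sup>2 / 4)"
      have w2: "w\<^sup>2 = 1/2 * exp (- t\<^sup>2 / 2)"
        by (simp add: w_def power2_eq_square exp_add[symmetric] exp_diff exp_minus field_simps)
      have "(1 - Phi t)\<^sup>2 \<le> w\<^sup>2"
      proof -
        have a: "1 - Phi t = Phi (-t)" by (simp add: Phi_neg)
        have "Phi (-t) \<le> 1/2" using Phi_neg_le_half t0 by simp
        moreover have "Phi (-t) \<le> exp (- t\<^sup>2 / 2)" using Phi_upper_tail t0 by simp
        ultimately have "Phi (-t) * Phi (-t) \<le> 1/2 * exp (- t\<^sup>2 / 2)"
          using Phi_nonneg by (intro mult_mono) auto
        then show ?thesis using a w2 by (simp add: power2_eq_square)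
      qed
      then have "1 - Phi t \<le> w"
        by (rule power2_le_imp_le) (simp add: w_def)
      then have "(1 - Phi t) ^ n \<le> w ^ n"
        using Phi_le1 by (intro power_mono) auto
      also have "\<dots> = exp (- (real n * (ln 2 / 2 + t\<^sup>2 / 4)))"
        by (simp add: w_def exp_of_nat_mult[symmetric] algebra_simps)
      also have "\<dots> \<le> exp (- ((y/\<sigma> + 1)\<^sup>2 / 2 + ln (sqrt (2*pi))))"
      proof -
        have "(y/\<sigma> + 1)\<^sup>2 \<le> 2 * (y/\<sigma>)\<^sup>2 + 2"
          using young[of 1 "y/\<sigma>" 1] by simp
        moreover have "(y/\<sigma>)\<^sup>2 = y\<^sup>2 / \<sigma>\<^sup>2" by (simp add: power_divide)
        moreover have "y\<^sup>2 \<le> 2 * t\<^sup>2 + 2 * r\<^sup>2"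
          using young[of 1 t r] by (simp add: y_def)
        ultimately have "(y/\<sigma> + 1)\<^sup>2 / 2 \<le> 2 * t\<^sup>2 / \<sigma>\<^sup>2 + 2 * r\<^sup>2 / \<sigma>\<^sup>2 + 1"
          using sg by (simp add: divide_right_mono add_divide_distrib[symmetric] field_simps)
        moreover have "2 * t\<^sup>2 / \<sigma>\<^sup>2 \<le> real n * t\<^sup>2 / 4"
          using mult_right_mono[OF HB2, of "t\<^sup>2"] by simp
        ultimately show ?thesis using HB3 by (simp add: algebra_simps)
      qed
      also have "\<dots> = exp (- (y/\<sigma> + 1)\<^sup>2 / 2) / sqrt (2 * pi)"
        by (simp add: exp_diff)
      finally show ?thesis .
    qed
    show ?thesis using key R G by linarith
  qed
qed


lemma ev_facts:
  fixes a c \<kappa> e \<delta> K K' :: real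
  assumes "a > 1/2" "0 < c" "0 < \<kappa>" "0 < \<delta>" "0 < e"
  shows "eventually (\<lambda>n::nat. 1 \<le> real n) at_top"
    "eventually (\<lambda>n::nat. 0 < ln (real n * c)) at_top"
    "eventually (\<lambda>n::nat. 1 + 1/e \<le> 2 * a * (ln (real n * c) + \<kappa>) / \<kappa>) at_top"
    "eventually (\<lambda>n::nat. 2 * sqrt (2*pi) * exp K \<le> real n powr \<delta>) at_top"
    "eventually (\<lambda>n::nat. 2 * ln (real n * c) * (ln (real n * c) + \<kappa>) / \<kappa> + 1 + ln (sqrt (2*pi)) \<le> exp (- K') / sqrt (2*pi) * real n powr \<delta>) at_top"
    "eventually (\<lambda>n::nat. 4 * a * (ln (real n * c) + \<kappa>) / \<kappa> \<le> real n / 4) at_top"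
    "eventually (\<lambda>n::nat. 4 * ln (real n * c) * (ln (real n * c) + \<kappa>) / \<kappa> + 1 + ln (sqrt (2*pi)) \<le> real n * ln 2 / 2) at_top"
  using assms by real_asymp+

lemma tan_gt_self: assumes "0 < u" "u < pi/2" shows "u < tan u"
proof -
  have "\<exists>z. 0 < z \<and> z < u \<and> (tan u - u) - (tan 0 - 0) = (u - 0) * (inverse ((cos z)\<^sup>2) - 1)"
  proof (rule MVT2)
    fix x assume "0 \<le> x" "x \<le> u"
    then have "cos x \<noteq> 0" using assms by (intro order.strict_implies_not_eq[symmetric] cos_gt_zero_pi) auto
    then show "((\<lambda>x. tan x - x) has_real_derivative inverse ((cos x)\<^sup>2) - 1) (at x)"
      by (auto intro!: derivative_eq_intros)
  qed (use assms in auto)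
  then obtain z where z: "0 < z" "z < u" "tan u - u = u * (inverse ((cos z)\<^sup>2) - 1)" by auto
  have c0: "0 < cos z" using z assms by (intro cos_gt_zero_pi) auto
  have "sin z > 0" using z assms by (intro sin_gt_zero) auto
  then have "(cos z)\<^sup>2 < 1" using sin_cos_squared_add[of z] by (smt (verit) zero_less_power)
  then have "inverse ((cos z)\<^sup>2) > 1" using c0 by (simp add: one_less_inverse)
  then show ?thesis using z assms by (smt (verit) mult_pos_pos)
qed

lemma c2_gt: assumes "0 < \<theta>" "\<theta> < pi/2" shows "c2 \<theta> > 1/2"
proof -
  define u where "u = pi/2 - \<theta>"
  have u: "0 < u" "u < pi/2" using assms by (auto simp: u_def)
  have "cot \<theta> = tan u" by (simp add: u_def tan_cot')
  moreover have "pi - 2 * \<theta> = 2 * u" by (simp add: u_def)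
  ultimately have "c2 \<theta> = tan u / (2 * u)" by (simp add: c2_def)
  then have "u * 1 < u * (2 * c2 \<theta>)" using tan_gt_self[OF u] u by (simp add: field_simps)
  then show ?thesis using u(1) mult_less_cancel_left_pos by fastforce
qed

lemma c1_bounds: assumes "0 < \<theta>" "\<theta> < pi/2" shows "0 < c1 \<theta>" "c1 \<theta> \<le> 1"
  using assms pi_gt_zero by (auto simp: c1_def field_simps)

lemma kappa_pos: "0 < - ln (ln (2::real))"
  using ln_2_less_1 by (simp add: ln_less_zero)

lemma dom_eventually:
  assumes th: "0 < \<theta>" "\<theta> < pi/2"
  shows "\<exists>N. \<forall>n\<ge>N. 0 < sigma2_n n \<theta> \<and> (\<forall>t. Phi ((t - mu_n n \<theta>) / sqrt (sigma2_n n \<theta>)) \<le> 1 - (1 - Phi t) ^ n)"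
proof -
  define a where "a = c2 \<theta>"
  define c where "c = c1 \<theta>"
  define \<kappa> where "\<kappa> = - ln (ln (2::real))"
  have a: "a > 1/2" using c2_gt[OF th] by (simp add: a_def)
  have c: "0 < c" "c \<le> 1" using c1_bounds[OF th] by (auto simp: c_def)
  have k: "0 < \<kappa>" using kappa_pos by (simp add: \<kappa>_def)
  define e where "e = sqrt ((1 + 2*a)/2) - 1"
  have e1: "(1 + e)\<^sup>2 = (1 + 2*a)/2" using a by (simp add: e_def)
  have e: "0 < e" using a by (simp add: e_def real_less_rsqrt)
  define \<beta> where "\<beta> = (1 + e)\<^sup>2 / (2*a)"
  define \<delta> where "\<delta> = 1 - \<beta>"
  have d: "0 < \<delta>" using a e1 by (simp add: \<delta>_def \<beta>_def field_simps)
  have b0: "0 \<le> \<beta>" using a by (simp add: \<beta>_def)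
  define K where "K = (1 + e) * (1 + 1/e) / 2"
  define K' where "K' = (1 + 1/e) / 2"
  define L where "L = (\<lambda>n::nat. ln (real n * c))"
  have ev: "eventually (\<lambda>n::nat. 1 \<le> real n \<and> 0 < ln (real n * c) \<and>
      1 + 1/e \<le> 2 * a * (ln (real n * c) + \<kappa>) / \<kappa> \<and>
      2 * sqrt (2*pi) * exp K \<le> real n powr \<delta> \<and>
      2 * ln (real n * c) * (ln (real n * c) + \<kappa>) / \<kappa> + 1 + ln (sqrt (2*pi)) \<le> exp (- K') / sqrt (2*pi) * real n powr \<delta> \<and>
      4 * a * (ln (real n * c) + \<kappa>) / \<kappa> \<le> real n / 4 \<and>
      4 * ln (real n * c) * (ln (real n * c) + \<kappa>) / \<kappa> + 1 + ln (sqrt (2*pi)) \<le> real n * ln 2 / 2) at_top"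
    unfolding eventually_conj_iff using ev_facts[OF a c(1) k d e] by blast
  then obtain N where N: "\<And>n. n \<ge> N \<Longrightarrow> 1 \<le> real n \<and> 0 < ln (real n * c) \<and>
      1 + 1/e \<le> 2 * a * (ln (real n * c) + \<kappa>) / \<kappa> \<and>
      2 * sqrt (2*pi) * exp K \<le> real n powr \<delta> \<and>
      2 * ln (real n * c) * (ln (real n * c) + \<kappa>) / \<kappa> + 1 + ln (sqrt (2*pi)) \<le> exp (- K') / sqrt (2*pi) * real n powr \<delta> \<and>
      4 * a * (ln (real n * c) + \<kappa>) / \<kappa> \<le> real n / 4 \<and>
      4 * ln (real n * c) * (ln (real n * c) + \<kappa>) / \<kappa> + 1 + ln (sqrt (2*pi)) \<le> real n * ln 2 / 2"
    by (auto simp: eventually_at_top_linorder)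
  show ?thesis
  proof (intro exI allI impI)
    fix n assume nN: "N \<le> n"
    note H = N[OF nN]
    have H1: "1 \<le> real n" and H2: "0 < ln (real n * c)"
      and H3: "1 + 1/e \<le> 2 * a * (ln (real n * c) + \<kappa>) / \<kappa>"
      and H4: "2 * sqrt (2*pi) * exp K \<le> real n powr \<delta>"
      and H5: "2 * ln (real n * c) * (ln (real n * c) + \<kappa>) / \<kappa> + 1 + ln (sqrt (2*pi)) \<le> exp (- K') / sqrt (2*pi) * real n powr \<delta>"
      and H6: "4 * a * (ln (real n * c) + \<kappa>) / \<kappa> \<le> real n / 4"
      and H7: "4 * ln (real n * c) * (ln (real n * c) + \<kappa>) / \<kappa> + 1 + ln (sqrt (2*pi)) \<le> real n * ln 2 / 2"
      using H by blast+
    define l where "l = ln (real n * c)"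
    have l: "0 < l" using H2 by (simp add: l_def)
    define r where "r = sqrt (l / a)"
    have r: "0 \<le> r" "r\<^sup>2 = l / a" using l a by (auto simp: r_def)
    define s2 where "s2 = \<kappa> / (2 * a * (l + \<kappa>))"
    have s2: "0 < s2" using k a l by (simp add: s2_def)
    have s2_eq: "sigma2_n n \<theta> = s2"
      by (simp add: sigma2_n_def s2_def \<kappa>_def a_def c_def l_def)
    have mu_eq: "mu_n n \<theta> = - r"
      by (simp add: mu_n_def r_def a_def c_def l_def)
    define \<sigma> where "\<sigma> = sqrt s2"
    have sg: "0 < \<sigma>" "\<sigma>\<^sup>2 = s2" using s2 by (auto simp: \<sigma>_def)
    have inv: "1 / \<sigma>\<^sup>2 = 2 * a * (l + \<kappa>) / \<kappa>" using sg(2) by (simp add: s2_def)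
    have rs: "r\<^sup>2 / \<sigma>\<^sup>2 = 2 * l * (l + \<kappa>) / \<kappa>"
    proof -
      have "r\<^sup>2 / \<sigma>\<^sup>2 = r\<^sup>2 * (1 / \<sigma>\<^sup>2)" by simp
      also have "\<dots> = l / a * (2 * a * (l + \<kappa>) / \<kappa>)" using inv r(2) by simp
      also have "\<dots> = 2 * l * (l + \<kappa>) / \<kappa>"
      proof -
        have a0: "a \<noteq> 0" using a by simp
        show ?thesis using a0 k by (simp add: field_simps)
      qed
      finally show ?thesis .
    qed
    have n0: "0 < real n" using H1 by simp
    have nc: "0 < real n * c" "real n * c \<le> real n" using n0 c by (auto simp: mult_le_cancel_left1)
    have yo1: "(r + 1)\<^sup>2 \<le> (1 + e) * r\<^sup>2 + (1 + 1/e)" using young[OF e, of r 1] by simp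
    have HA: "2 * sqrt (2*pi) * exp ((1 + e) * (r + 1)\<^sup>2 / 2) \<le> real n"
    proof -
      have "(1 + e) * (r + 1)\<^sup>2 / 2 \<le> (1 + e) * ((1 + e) * r\<^sup>2 + (1 + 1/e)) / 2"
        using yo1 e by (intro divide_right_mono mult_left_mono) auto
      also have "\<dots> = \<beta> * l + K"
      proof -
        have a0: "a \<noteq> 0" using a by simp
        have lr: "l = a * r\<^sup>2" using r(2) a0 by simp
        show ?thesis using a0 e by (simp add: lr \<beta>_def K_def power2_eq_square field_simps)
      qed
      finally have "exp ((1 + e) * (r + 1)\<^sup>2 / 2) \<le> exp (\<beta> * l) * exp K"
        by (simp add: exp_add[symmetric])
      also have "exp (\<beta> * l) = (real n * c) powr \<beta>" using nc c by (simp add: powr_def l_def)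
      also have "\<dots> \<le> real n powr \<beta>" using nc b0 by (intro powr_mono2) auto
      finally have "2 * sqrt (2*pi) * exp ((1 + e) * (r + 1)\<^sup>2 / 2) \<le> 2 * sqrt (2*pi) * exp K * real n powr \<beta>"
        by (simp add: mult_left_mono mult.commute)
      also have "\<dots> \<le> real n powr \<delta> * real n powr \<beta>"
        using H4 by (intro mult_right_mono) auto
      also have "\<dots> = real n" using n0 by (simp add: powr_add[symmetric] \<delta>_def)
      finally show ?thesis .
    qed
    have HB1: "(r/\<sigma> + 1)\<^sup>2 / 2 + ln (sqrt (2*pi)) \<le> real n * exp (- (r + 1)\<^sup>2 / 2) / sqrt (2*pi)"
    proof -
      have "(r/\<sigma> + 1)\<^sup>2 \<le> 2 * (r/\<sigma>)\<^sup>2 + 2" using young[of 1 "r/\<sigma>" 1] by simp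
      also have "(r/\<sigma>)\<^sup>2 = 2 * l * (l + \<kappa>) / \<kappa>" using rs by (simp add: power_divide)
      finally have "(r/\<sigma> + 1)\<^sup>2 / 2 + ln (sqrt (2*pi)) \<le> 2 * l * (l + \<kappa>) / \<kappa> + 1 + ln (sqrt (2*pi))"
        by simp
      also have "\<dots> \<le> exp (- K') / sqrt (2*pi) * real n powr \<delta>" using H5 by (simp add: l_def)
      also have "\<dots> \<le> real n * exp (- (r + 1)\<^sup>2 / 2) / sqrt (2*pi)"
      proof -
        have "(r + 1)\<^sup>2 / 2 \<le> ((1 + e) * r\<^sup>2 + (1 + 1/e)) / 2" using yo1 by simp
        also have "\<dots> = (1 + e) / (2 * a) * l + K'"
        proof -
          have a0: "a \<noteq> 0" using a by simp
          have lr: "l = a * r\<^sup>2" using r(2) a0 by simp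
          show ?thesis using a0 e by (simp add: lr K'_def power2_eq_square field_simps)
        qed
        also have "\<dots> \<le> \<beta> * l + K'"
        proof -
          have "(1 + e) \<le> (1 + e)\<^sup>2" using e by (simp add: power2_eq_square)
          then have "(1 + e) / (2 * a) \<le> \<beta>" using a by (simp add: \<beta>_def divide_right_mono)
          then have "(1 + e) / (2 * a) * l \<le> \<beta> * l" using l by (intro mult_right_mono) auto
          then show ?thesis by simp
        qed
        finally have "exp (- (\<beta> * l) - K') \<le> exp (- (r + 1)\<^sup>2 / 2)" by simp
        moreover have "exp (- (\<beta> * l) - K') = exp (- K') / (real n * c) powr \<beta>"
          using nc c by (simp add: powr_def l_def exp_diff exp_minus field_simps)
        moreover have "exp (- K') / real n powr \<beta> \<le> exp (- K') / (real n * c) powr \<beta>"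
          using nc by (intro divide_left_mono powr_mono2 mult_pos_pos) (auto simp: b0)
        ultimately have ex: "exp (- K') / real n powr \<beta> \<le> exp (- (r + 1)\<^sup>2 / 2)" by linarith
        have "exp (- K') * real n powr \<delta> = real n * (exp (- K') / real n powr \<beta>)"
          using n0 by (simp add: \<delta>_def powr_diff field_simps)
        also have "\<dots> \<le> real n * exp (- (r + 1)\<^sup>2 / 2)" using mult_left_mono[OF ex, of "real n"] n0 by simp
        finally show ?thesis by (simp add: divide_right_mono)
      qed
      finally show ?thesis .
    qed
    have Hk: "1 + 1/e \<le> 1/\<sigma>\<^sup>2" using H3 inv by (simp only: l_def)
    have "2 / \<sigma>\<^sup>2 = 2 * (1 / \<sigma>\<^sup>2)" by simp
    then have HB2: "2 / \<sigma>\<^sup>2 \<le> real n / 4" using H6 inv unfolding l_def by linarith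
    have "2 * r\<^sup>2 / \<sigma>\<^sup>2 = 2 * (r\<^sup>2 / \<sigma>\<^sup>2)" by simp
    then have HB3: "2 * r\<^sup>2 / \<sigma>\<^sup>2 + 1 + ln (sqrt (2*pi)) \<le> real n * ln 2 / 2"
      using H7 rs unfolding l_def by linarith
    have n1: "n \<ge> 1" using H1 by simp
    have "\<forall>t. Phi ((t + r) / \<sigma>) \<le> 1 - (1 - Phi t) ^ n"
      using dom_core[OF n1 r(1) sg(1) e Hk HA HB1 HB2 HB3] by blast
    then show "0 < sigma2_n n \<theta> \<and> (\<forall>t. Phi ((t - mu_n n \<theta>) / sqrt (sigma2_n n \<theta>)) \<le> 1 - (1 - Phi t) ^ n)"
      using s2 by (simp add: s2_eq mu_eq \<sigma>_def)
  qed
qed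


lemma UV_prob: "prob_space pair_measure_UV"
  unfolding pair_measure_UV_def by (intro prob_space_pair N_prob)

lemma space_UV[simp]: "space pair_measure_UV = UNIV"
  unfolding pair_measure_UV_def by (simp add: space_pair_measure)

lemma sets_UV[measurable_cong]: "sets pair_measure_UV = sets (borel \<Otimes>\<^sub>M borel)"
  unfolding pair_measure_UV_def by (intro sets_pair_measure_cong) simp_all

interpretation UV: prob_space pair_measure_UV by (rule UV_prob)

interpretation PP: product_prob_space "\<lambda>_::nat. pair_measure_UV" I for I
  by unfold_locales

lemma sample_prob: "prob_space (sample_space n)"
  unfolding sample_space_def by (rule PP.P.prob_space_axioms)

lemma factor_snd:
  fixes n i :: nat and A :: "(nat \<Rightarrow> real \<times> real) set" and B :: "real set"
  assumes i: "i < n" and A: "A \<in> sets (sample_space n)" and B: "B \<in> sets borel"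
    and cl: "\<And>\<omega> \<omega>'. \<omega> \<in> A \<Longrightarrow> \<omega>' \<in> space (sample_space n) \<Longrightarrow> (\<And>j. j < n \<Longrightarrow> fst (\<omega>' j) = fst (\<omega> j)) \<Longrightarrow> \<omega>' \<in> A"
  shows "emeasure (sample_space n) (A \<inter> {\<omega> \<in> space (sample_space n). snd (\<omega> i) \<in> B})
       = emeasure (sample_space n) A * emeasure std_normal B"
proof -
  let ?M = "\<lambda>_::nat. pair_measure_UV"
  define I where "I = {..<n} - {i}"
  have ins: "insert i I = {..<n}" and iI: "i \<notin> I" and fI: "finite I" using i by (auto simp: I_def)
  have SS: "sample_space n = PiM (insert i I) ?M" by (simp add: sample_space_def ins)
  have gen: "emeasure (sample_space n) X = (\<integral>\<^sup>+ x. (\<integral>\<^sup>+ y. indicator X (x(i := y)) \<partial>pair_measure_UV) \<partial>PiM I ?M)"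
    if X: "X \<in> sets (sample_space n)" for X
  proof -
    have "emeasure (sample_space n) X = (\<integral>\<^sup>+ \<omega>. indicator X \<omega> \<partial>sample_space n)"
      using X by simp
    also have "\<dots> = (\<integral>\<^sup>+ x. (\<integral>\<^sup>+ y. indicator X (x(i := y)) \<partial>pair_measure_UV) \<partial>PiM I ?M)"
      unfolding SS by (rule PP.product_nn_integral_insert[OF fI iI]) (use X SS in simp)
    finally show ?thesis .
  qed
  define SB where "SB = {\<omega> \<in> space (sample_space n). snd (\<omega> i) \<in> B}"
  have SBm: "SB \<in> sets (sample_space n)"
  proof -
    have "(\<lambda>\<omega>. snd (\<omega> i)) \<in> borel_measurable (sample_space n)"
    proof -
      have "(\<lambda>\<omega>. \<omega> i) \<in> measurable (sample_space n) pair_measure_UV"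
        unfolding sample_space_def using i by (intro measurable_component_singleton) auto
      moreover have "snd \<in> borel_measurable pair_measure_UV"
        unfolding pair_measure_UV_def by measurable
      ultimately show ?thesis by (rule measurable_compose)
    qed
    from measurable_sets[OF this B] show ?thesis unfolding SB_def by (simp add: vimage_def Int_def conj_commute)
  qed
  have AS: "A \<inter> SB \<in> sets (sample_space n)" using A SBm by auto
  define h where "h x = (\<integral>\<^sup>+ y. indicator A (x(i := y)) \<partial>pair_measure_UV)" for x
  have inner: "(\<integral>\<^sup>+ y. indicator (A \<inter> SB) (x(i := y)) \<partial>pair_measure_UV) = h x * emeasure std_normal B"
    if x: "x \<in> space (PiM I ?M)" for x
  proof -
    have xsp: "x(i := y) \<in> space (sample_space n)" for y
      using x unfolding SS by (auto simp: space_PiM PiE_def extensional_def)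
    have upd: "(\<lambda>y. x(i := y)) \<in> measurable pair_measure_UV (sample_space n)"
      unfolding SS using x iI by (rule measurable_component_update)
    have Am: "(\<lambda>y. indicator A (x(i := y)) :: ennreal) \<in> borel_measurable pair_measure_UV"
      using measurable_comp[OF upd borel_measurable_indicator[OF A]] by (simp add: comp_def)
    define g where "g u = (indicator A (x(i := (u, 0))) :: ennreal)" for u
    have g: "g \<in> borel_measurable std_normal"
    proof -
      have "(\<lambda>u::real. (u, 0::real)) \<in> measurable std_normal pair_measure_UV"
        unfolding pair_measure_UV_def by measurable
      from measurable_comp[OF this Am] show ?thesis by (simp add: g_def[abs_def] comp_def)
    qed
    have cl2: "indicator A (x(i := (u, v))) = g u" for u v
    proof -
      have "x(i := (u, v)) \<in> A \<longleftrightarrow> x(i := (u, 0)) \<in> A"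
        using cl[of "x(i := (u, v))" "x(i := (u, 0))"] cl[of "x(i := (u, 0))" "x(i := (u, v))"] xsp
        by (auto simp: fun_upd_def)
      then show ?thesis by (simp add: g_def indicator_def)
    qed
    have gen2: "(\<integral>\<^sup>+ y. indicator A (x(i := y)) * indicator C (snd y) \<partial>pair_measure_UV) = (\<integral>\<^sup>+ u. g u \<partial>std_normal) * emeasure std_normal C"
      if C: "C \<in> sets borel" for C
    proof -
      have m: "(\<lambda>y. indicator A (x(i := y)) * indicator C (snd y) :: ennreal) \<in> borel_measurable (std_normal \<Otimes>\<^sub>M std_normal)"
        using Am C unfolding pair_measure_UV_def by measurable
      have "(\<integral>\<^sup>+ y. indicator A (x(i := y)) * indicator C (snd y) \<partial>pair_measure_UV)
          = (\<integral>\<^sup>+ u. (\<integral>\<^sup>+ v. indicator A (x(i := (u, v))) * indicator C v \<partial>std_normal) \<partial>std_normal)"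
        unfolding pair_measure_UV_def using N.nn_integral_fst[OF m] by simp
      also have "\<dots> = (\<integral>\<^sup>+ u. g u * emeasure std_normal C \<partial>std_normal)"
        using C by (simp add: cl2 nn_integral_cmult)
      also have "\<dots> = (\<integral>\<^sup>+ u. g u \<partial>std_normal) * emeasure std_normal C"
        using g by (rule nn_integral_multc)
      finally show ?thesis .
    qed
    have "h x = (\<integral>\<^sup>+ y. indicator A (x(i := y)) * indicator UNIV (snd y) \<partial>pair_measure_UV)"
      by (simp add: h_def)
    also have "\<dots> = (\<integral>\<^sup>+ u. g u \<partial>std_normal)" using gen2[of UNIV] N.emeasure_space_1 by simp
    finally have hx: "h x = (\<integral>\<^sup>+ u. g u \<partial>std_normal)" .
    have "(\<integral>\<^sup>+ y. indicator (A \<inter> SB) (x(i := y)) \<partial>pair_measure_UV)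
        = (\<integral>\<^sup>+ y. indicator A (x(i := y)) * indicator B (snd y) \<partial>pair_measure_UV)"
      using xsp by (intro nn_integral_cong) (auto simp: SB_def indicator_def)
    also have "\<dots> = h x * emeasure std_normal B" using gen2[OF B] hx by simp
    finally show ?thesis .
  qed
  have hm: "h \<in> borel_measurable (PiM I ?M)"
  proof -
    have "(\<lambda>(x, y). x(i := y)) \<in> measurable (PiM I ?M \<Otimes>\<^sub>M pair_measure_UV) (sample_space n)"
      unfolding SS by (rule measurable_add_dim)
    from measurable_comp[OF this borel_measurable_indicator[OF A]]
    have "(\<lambda>p. indicator A (case p of (x, y) \<Rightarrow> x(i := y)) :: ennreal) \<in> borel_measurable (PiM I ?M \<Otimes>\<^sub>M pair_measure_UV)"
      by (simp add: comp_def)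
    then show ?thesis unfolding h_def
      by (intro UV.borel_measurable_nn_integral) (simp add: case_prod_beta')
  qed
  have "emeasure (sample_space n) (A \<inter> SB) = (\<integral>\<^sup>+ x. h x * emeasure std_normal B \<partial>PiM I ?M)"
    using gen[OF AS] inner by (simp cong: nn_integral_cong)
  also have "\<dots> = (\<integral>\<^sup>+ x. h x \<partial>PiM I ?M) * emeasure std_normal B"
    using hm by (rule nn_integral_multc)
  also have "(\<integral>\<^sup>+ x. h x \<partial>PiM I ?M) = emeasure (sample_space n) A"
    using gen[OF A] by (simp add: h_def)
  finally show ?thesis by (simp add: SB_def)
qed


definition isopt :: "nat \<Rightarrow> (nat \<Rightarrow> real \<times> real) \<Rightarrow> nat \<Rightarrow> bool" where
  "isopt n \<omega> k \<longleftrightarrow> k < n \<and> (\<forall>j\<in>{..<n}. fst (\<omega> k) \<le> fst (\<omega> j))"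

definition istar :: "nat \<Rightarrow> (nat \<Rightarrow> real \<times> real) \<Rightarrow> nat" where
  "istar n \<omega> = (LEAST k. isopt n \<omega> k)"

definition Ym :: "nat \<Rightarrow> (nat \<Rightarrow> real \<times> real) \<Rightarrow> real" where
  "Ym n \<omega> = fst (\<omega> (istar n \<omega>))"

definition Vs :: "nat \<Rightarrow> (nat \<Rightarrow> real \<times> real) \<Rightarrow> real" where
  "Vs n \<omega> = snd (\<omega> (istar n \<omega>))"

lemma sample_fin: "emeasure (sample_space n) A \<noteq> \<top>"
  using finite_measure.emeasure_finite[OF prob_space.finite_measure[OF sample_prob]] by blast

lemma ex_opt: assumes "1 \<le> n" shows "\<exists>k. isopt n \<omega> k"
proof -
  let ?S = "(\<lambda>j. fst (\<omega> j)) ` {..<n}"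
  have fin: "finite ?S" "?S \<noteq> {}" using assms by (auto simp: lessThan_empty_iff)
  then have "Min ?S \<in> ?S" by (rule Min_in)
  then obtain k where k: "k < n" "fst (\<omega> k) = Min ?S" by auto
  have "\<forall>j\<in>{..<n}. fst (\<omega> k) \<le> fst (\<omega> j)" using k fin by auto
  then show ?thesis using k by (auto simp: isopt_def)
qed

lemma istar_opt: "1 \<le> n \<Longrightarrow> isopt n \<omega> (istar n \<omega>)"
  unfolding istar_def using ex_opt by (rule LeastI_ex)

lemma istar_lt: "1 \<le> n \<Longrightarrow> istar n \<omega> < n"
  using istar_opt by (auto simp: isopt_def)

lemma Ym_le: "1 \<le> n \<Longrightarrow> j < n \<Longrightarrow> Ym n \<omega> \<le> fst (\<omega> j)"
  using istar_opt[of n \<omega>] by (auto simp: isopt_def Ym_def)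

lemma istar_eq: "1 \<le> n \<Longrightarrow> istar n \<omega> = i \<longleftrightarrow> isopt n \<omega> i \<and> (\<forall>k<i. \<not> isopt n \<omega> k)"
  unfolding istar_def
  by (metis (mono_tags, lifting) LeastI_ex ex_opt not_less_Least linorder_neqE_nat)

lemma isopt_cong: "(\<And>j. j < n \<Longrightarrow> fst (\<omega>' j) = fst (\<omega> j)) \<Longrightarrow> isopt n \<omega>' = isopt n \<omega>"
  by (auto simp: isopt_def fun_eq_iff)

lemma istar_cong: "(\<And>j. j < n \<Longrightarrow> fst (\<omega>' j) = fst (\<omega> j)) \<Longrightarrow> istar n \<omega>' = istar n \<omega>"
  unfolding istar_def using isopt_cong by metis

lemma Ym_cong: "1 \<le> n \<Longrightarrow> (\<And>j. j < n \<Longrightarrow> fst (\<omega>' j) = fst (\<omega> j)) \<Longrightarrow> Ym n \<omega>' = Ym n \<omega>"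
  unfolding Ym_def using istar_cong istar_lt by metis

lemma fst_meas: "j < n \<Longrightarrow> (\<lambda>\<omega>. fst (\<omega> j)) \<in> borel_measurable (sample_space n)"
proof -
  assume j: "j < n"
  have "(\<lambda>\<omega>. \<omega> j) \<in> measurable (sample_space n) pair_measure_UV"
    unfolding sample_space_def using j by (intro measurable_component_singleton) auto
  moreover have "fst \<in> borel_measurable pair_measure_UV"
    unfolding pair_measure_UV_def by measurable
  ultimately show ?thesis by (rule measurable_compose)
qed

lemma snd_meas: "j < n \<Longrightarrow> (\<lambda>\<omega>. snd (\<omega> j)) \<in> borel_measurable (sample_space n)"
proof -
  assume j: "j < n"
  have "(\<lambda>\<omega>. \<omega> j) \<in> measurable (sample_space n) pair_measure_UV"
    unfolding sample_space_def using j by (intro measurable_component_singleton) auto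
  moreover have "snd \<in> borel_measurable pair_measure_UV"
    unfolding pair_measure_UV_def by measurable
  ultimately show ?thesis by (rule measurable_compose)
qed

lemma le_sets: "f \<in> borel_measurable M \<Longrightarrow> g \<in> borel_measurable M \<Longrightarrow> {\<omega> \<in> space M. f \<omega> \<le> (g \<omega> :: real)} \<in> sets M"
  by measurable

lemma isopt_sets: "{\<omega> \<in> space (sample_space n). isopt n \<omega> k} \<in> sets (sample_space n)"
proof (cases "k < n")
  case True
  have "{\<omega> \<in> space (sample_space n). isopt n \<omega> k}
      = (\<Inter>j\<in>{..<n}. {\<omega> \<in> space (sample_space n). fst (\<omega> k) \<le> fst (\<omega> j)})"
    using True by (auto simp: isopt_def)
  also have "\<dots> \<in> sets (sample_space n)"
    using True by (intro sets.finite_INT le_sets fst_meas) auto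
  finally show ?thesis .
qed (auto simp: isopt_def)

lemma istar_sets: assumes "1 \<le> n" shows "{\<omega> \<in> space (sample_space n). istar n \<omega> = i} \<in> sets (sample_space n)"
proof -
  have "{\<omega> \<in> space (sample_space n). istar n \<omega> = i}
      = {\<omega> \<in> space (sample_space n). isopt n \<omega> i} - (\<Union>k\<in>{..<i}. {\<omega> \<in> space (sample_space n). isopt n \<omega> k})"
    using istar_eq[OF assms] by auto
  also have "\<dots> \<in> sets (sample_space n)"
    by (intro sets.Diff sets.finite_UN isopt_sets) auto
  finally show ?thesis .
qed

lemma istar_meas: assumes "1 \<le> n" shows "istar n \<in> measurable (sample_space n) (count_space {..<n})"
  unfolding measurable_count_space_eq2_countable
proof
  show "istar n \<in> space (sample_space n) \<rightarrow> {..<n}" using istar_lt[OF assms] by auto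
  show "\<forall>a\<in>{..<n}. istar n -` {a} \<inter> space (sample_space n) \<in> sets (sample_space n)"
    using istar_sets[OF assms] by (auto simp: vimage_def Int_def conj_commute)
qed

lemma Ym_meas: assumes "1 \<le> n" shows "Ym n \<in> borel_measurable (sample_space n)"
proof -
  have "(\<lambda>\<omega>. (\<lambda>i \<omega>. fst (\<omega> i)) (istar n \<omega>) \<omega>) \<in> borel_measurable (sample_space n)"
    by (rule measurable_compose_countable'[OF _ istar_meas[OF assms]]) (auto intro: fst_meas)
  then show ?thesis by (simp add: Ym_def[abs_def])
qed

lemma Vs_meas: assumes "1 \<le> n" shows "Vs n \<in> borel_measurable (sample_space n)"
proof -
  have "(\<lambda>\<omega>. (\<lambda>i \<omega>. snd (\<omega> i)) (istar n \<omega>) \<omega>) \<in> borel_measurable (sample_space n)"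
    by (rule measurable_compose_countable'[OF _ istar_meas[OF assms]]) (auto intro: snd_meas)
  then show ?thesis by (simp add: Vs_def[abs_def])
qed

lemma joint_factor:
  assumes n: "1 \<le> n" and A: "A \<in> sets borel" and B: "B \<in> sets borel"
  shows "emeasure (sample_space n) {\<omega> \<in> space (sample_space n). Ym n \<omega> \<in> A \<and> Vs n \<omega> \<in> B}
       = emeasure (sample_space n) {\<omega> \<in> space (sample_space n). Ym n \<omega> \<in> A} * emeasure std_normal B"
proof -
  let ?S = "space (sample_space n)"
  define F where "F i = {\<omega> \<in> ?S. istar n \<omega> = i \<and> Ym n \<omega> \<in> A}" for i
  define SB where "SB i = {\<omega> \<in> ?S. snd (\<omega> i) \<in> B}" for i
  have Ym_sets: "{\<omega> \<in> ?S. Ym n \<omega> \<in> A} \<in> sets (sample_space n)"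
    using measurable_sets[OF Ym_meas[OF n] A] by (simp add: vimage_def Int_def conj_commute)
  have Fs: "F i \<in> sets (sample_space n)" for i
  proof -
    have "F i = {\<omega> \<in> ?S. istar n \<omega> = i} \<inter> {\<omega> \<in> ?S. Ym n \<omega> \<in> A}" by (auto simp: F_def)
    then show ?thesis using istar_sets[OF n] Ym_sets by auto
  qed
  have SBs: "i < n \<Longrightarrow> SB i \<in> sets (sample_space n)" for i
    using measurable_sets[OF snd_meas B] by (simp add: SB_def vimage_def Int_def conj_commute)
  have eq1: "{\<omega> \<in> ?S. Ym n \<omega> \<in> A \<and> Vs n \<omega> \<in> B} = (\<Union>i\<in>{..<n}. F i \<inter> SB i)"
    using istar_lt[OF n] by (auto simp: F_def SB_def Vs_def)
  have eq2: "{\<omega> \<in> ?S. Ym n \<omega> \<in> A} = (\<Union>i\<in>{..<n}. F i)"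
    using istar_lt[OF n] by (auto simp: F_def)
  have disj1: "disjoint_family_on (\<lambda>i. F i \<inter> SB i) {..<n}"
    by (auto simp: disjoint_family_on_def F_def)
  have disj2: "disjoint_family_on F {..<n}"
    by (auto simp: disjoint_family_on_def F_def)
  have trm: "emeasure (sample_space n) (F i \<inter> SB i) = emeasure (sample_space n) (F i) * emeasure std_normal B"
    if i: "i < n" for i
    unfolding SB_def
  proof (rule factor_snd[OF i Fs B])
    fix \<omega> \<omega>' assume w: "\<omega> \<in> F i" "\<omega>' \<in> ?S" and eq: "\<And>j. j < n \<Longrightarrow> fst (\<omega>' j) = fst (\<omega> j)"
    show "\<omega>' \<in> F i" using w istar_cong[of n \<omega>' \<omega>, OF eq] Ym_cong[OF n, of \<omega>' \<omega>, OF eq]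
      by (auto simp: F_def)
  qed
  have "emeasure (sample_space n) {\<omega> \<in> ?S. Ym n \<omega> \<in> A \<and> Vs n \<omega> \<in> B}
      = (\<Sum>i\<in>{..<n}. emeasure (sample_space n) (F i \<inter> SB i))"
    unfolding eq1 using Fs SBs disj1 by (intro sum_emeasure[symmetric]) auto
  also have "\<dots> = (\<Sum>i\<in>{..<n}. emeasure (sample_space n) (F i)) * emeasure std_normal B"
    using trm by (simp add: sum_distrib_right)
  also have "(\<Sum>i\<in>{..<n}. emeasure (sample_space n) (F i)) = emeasure (sample_space n) {\<omega> \<in> ?S. Ym n \<omega> \<in> A}"
    unfolding eq2 using Fs disj2 by (intro sum_emeasure) auto
  finally show ?thesis .
qed

definition DY :: "nat \<Rightarrow> real measure" where
  "DY n = distr (sample_space n) borel (Ym n)"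

lemma DY_prob: "1 \<le> n \<Longrightarrow> prob_space (DY n)"
  unfolding DY_def by (intro prob_space.prob_space_distr sample_prob Ym_meas)

lemma joint_distr:
  assumes n: "1 \<le> n"
  shows "distr (sample_space n) (borel \<Otimes>\<^sub>M borel) (\<lambda>\<omega>. (Ym n \<omega>, Vs n \<omega>)) = DY n \<Otimes>\<^sub>M std_normal"
proof (rule pair_measure_eqI[symmetric])
  show "sigma_finite_measure (DY n)" using DY_prob[OF n] by (simp add: prob_space_imp_sigma_finite)
  show "sigma_finite_measure std_normal" using N_prob by (simp add: prob_space_imp_sigma_finite)
  show "sets (DY n \<Otimes>\<^sub>M std_normal) = sets (distr (sample_space n) (borel \<Otimes>\<^sub>M borel) (\<lambda>\<omega>. (Ym n \<omega>, Vs n \<omega>)))"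
    by (simp add: DY_def cong: sets_pair_measure_cong)
  have pm: "(\<lambda>\<omega>. (Ym n \<omega>, Vs n \<omega>)) \<in> measurable (sample_space n) (borel \<Otimes>\<^sub>M borel)"
    using Ym_meas[OF n] Vs_meas[OF n] by (intro measurable_Pair)
  fix A B assume A: "A \<in> sets (DY n)" and B: "B \<in> sets std_normal"
  then have A': "A \<in> sets borel" and B': "B \<in> sets borel" by (auto simp: DY_def)
  have "emeasure (distr (sample_space n) (borel \<Otimes>\<^sub>M borel) (\<lambda>\<omega>. (Ym n \<omega>, Vs n \<omega>))) (A \<times> B)
      = emeasure (sample_space n) {\<omega> \<in> space (sample_space n). Ym n \<omega> \<in> A \<and> Vs n \<omega> \<in> B}"
    using A' B' by (subst emeasure_distr[OF pm]) (auto intro!: arg_cong[where f="emeasure (sample_space n)"])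
  also have "\<dots> = emeasure (sample_space n) {\<omega> \<in> space (sample_space n). Ym n \<omega> \<in> A} * emeasure std_normal B"
    by (rule joint_factor[OF n A' B'])
  also have "emeasure (sample_space n) {\<omega> \<in> space (sample_space n). Ym n \<omega> \<in> A} = emeasure (DY n) A"
    unfolding DY_def using A' by (subst emeasure_distr[OF Ym_meas[OF n]]) (auto intro!: arg_cong[where f="emeasure (sample_space n)"])
  finally show "emeasure (DY n) A * emeasure std_normal B
      = emeasure (distr (sample_space n) (borel \<Otimes>\<^sub>M borel) (\<lambda>\<omega>. (Ym n \<omega>, Vs n \<omega>))) (A \<times> B)" by simp
qed

lemma DY_cdf:
  assumes n: "1 \<le> n"
  shows "emeasure (DY n) {..x} = ennreal (1 - (1 - Phi x) ^ n)"
proof -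
  let ?S = "space (sample_space n)"
  have spc: "?S = PiE {..<n} (\<lambda>_. UNIV)"
    by (simp add: sample_space_def space_PiM)
  define T where "T = PiE {..<n} (\<lambda>_::nat. {x<..} \<times> (UNIV::real set))"
  have T: "T \<in> sets (sample_space n)"
    unfolding T_def sample_space_def
    by (intro sets_PiM_I_finite) (auto simp: sets_UV)
  have "emeasure (sample_space n) T = (\<Prod>j\<in>{..<n}. emeasure pair_measure_UV ({x<..} \<times> UNIV))"
    unfolding T_def sample_space_def by (intro PP.emeasure_PiM) (auto simp: sets_UV)
  also have "emeasure pair_measure_UV ({x<..} \<times> UNIV) = emeasure std_normal {x<..}"
    unfolding pair_measure_UV_def using N.emeasure_space_1
    by (subst N.emeasure_pair_measure_Times) auto
  also have "emeasure std_normal {x<..} = ennreal (1 - Phi x)" by (simp add: emeasure_N_measure N_Ioi)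
  finally have eT: "emeasure (sample_space n) T = ennreal ((1 - Phi x) ^ n)"
    using Phi_le1 by (simp add: ennreal_power)
  have eq: "Ym n -` {..x} \<inter> ?S = ?S - T"
  proof (rule set_eqI, rule iffI)
    fix \<omega> assume "\<omega> \<in> Ym n -` {..x} \<inter> ?S"
    then have "\<omega> \<in> ?S" "Ym n \<omega> \<le> x" by auto
    then show "\<omega> \<in> ?S - T"
      using istar_lt[OF n, of \<omega>] by (auto simp: T_def Ym_def PiE_def Pi_def)
  next
    fix \<omega> assume w: "\<omega> \<in> ?S - T"
    then have "\<not> (\<forall>j<n. fst (\<omega> j) > x)" using spc by (auto simp: T_def PiE_def Pi_def mem_Times_iff)
    then obtain j where "j < n" "fst (\<omega> j) \<le> x" by auto
    then show "\<omega> \<in> Ym n -` {..x} \<inter> ?S" using Ym_le[OF n, of j \<omega>] w by auto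
  qed
  have "emeasure (DY n) {..x} = emeasure (sample_space n) (?S - T)"
    unfolding DY_def by (subst emeasure_distr[OF Ym_meas[OF n]]) (auto simp: eq)
  also have "\<dots> = emeasure (sample_space n) ?S - emeasure (sample_space n) T"
    using T sets.sets_into_space[OF T] sample_fin by (intro emeasure_Diff) auto
  also have "\<dots> = 1 - ennreal ((1 - Phi x) ^ n)"
    using prob_space.emeasure_space_1[OF sample_prob] eT by simp
  also have "\<dots> = ennreal (1 - (1 - Phi x) ^ n)"
    using Phi_le1 Phi_nonneg by (subst ennreal_1[symmetric], subst ennreal_minus) auto
  finally show ?thesis .
qed


definition Wd :: "real \<Rightarrow> real \<Rightarrow> real measure" where
  "Wd \<mu> \<sigma> = density lborel (normal_density \<mu> \<sigma>)"

lemma Wd_prob: "0 < \<sigma> \<Longrightarrow> prob_space (Wd \<mu> \<sigma>)"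
  unfolding Wd_def by (rule prob_space_normal_density)

lemma sets_Wd[simp, measurable_cong]: "sets (Wd \<mu> \<sigma>) = sets borel"
  by (simp add: Wd_def)

lemma space_Wd[simp]: "space (Wd \<mu> \<sigma>) = UNIV"
  by (simp add: Wd_def)

lemma std_emeasure:
  assumes "distributed M lborel X std_normal_density"
  shows "emeasure M (X -` {..z} \<inter> space M) = ennreal (Phi z)"
proof -
  have "emeasure M (X -` {..z} \<inter> space M) = (\<integral>\<^sup>+x. ennreal (std_normal_density x) * indicator {..z} x \<partial>lborel)"
    by (rule distributed_emeasure[OF assms]) simp
  also have "\<dots> = emeasure std_normal {..z}" by (rule emeasure_N[symmetric]) simp
  finally show ?thesis by (simp add: emeasure_N_measure Phi_def)
qed

lemma Wd_cdf: assumes "0 < \<sigma>" shows "emeasure (Wd \<mu> \<sigma>) {..x} = ennreal (Phi ((x - \<mu>) / \<sigma>))"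
proof -
  interpret W: prob_space "Wd \<mu> \<sigma>" by (rule Wd_prob[OF assms])
  have d: "distributed (Wd \<mu> \<sigma>) lborel (\<lambda>x. x) (normal_density \<mu> \<sigma>)"
    unfolding distributed_def Wd_def by (auto intro!: measure_eqI simp: emeasure_distr)
  have "distributed (Wd \<mu> \<sigma>) lborel (\<lambda>x. (x - \<mu>) / \<sigma>) std_normal_density"
    using W.normal_standard_normal_convert[OF assms] d by simp
  from std_emeasure[OF this, of "(x - \<mu>) / \<sigma>"]
  have "emeasure (Wd \<mu> \<sigma>) ((\<lambda>x. (x - \<mu>) / \<sigma>) -` {..(x - \<mu>) / \<sigma>}) = ennreal (Phi ((x - \<mu>) / \<sigma>))" by simp
  moreover have "(\<lambda>x. (x - \<mu>) / \<sigma>) -` {..(x - \<mu>) / \<sigma>} = {..x}"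
    using assms by (auto simp: divide_le_cancel)
  ultimately show ?thesis by simp
qed

lemma distr_fst_pair:
  assumes "prob_space M2" "sets M1 = sets borel" "sets M1' = sets borel" "space M1 = UNIV" "space M1' = (UNIV::real set)"
    "sigma_finite_measure M1"
  shows "distr (M1 \<Otimes>\<^sub>M M2) M1' fst = M1"
proof (rule measure_eqI)
  interpret M2: prob_space M2 by fact
  show "sets (distr (M1 \<Otimes>\<^sub>M M2) M1' fst) = sets M1" using assms by simp
  fix A assume "A \<in> sets (distr (M1 \<Otimes>\<^sub>M M2) M1' fst)"
  then have A: "A \<in> sets M1" using assms by simp
  have fm: "fst \<in> measurable (M1 \<Otimes>\<^sub>M M2) M1'"
    using assms measurable_fst by (metis measurable_cong_sets)
  have "emeasure (distr (M1 \<Otimes>\<^sub>M M2) M1' fst) A = emeasure (M1 \<Otimes>\<^sub>M M2) (A \<times> space M2)"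
    using A assms by (subst emeasure_distr[OF fm]) (auto simp: space_pair_measure intro!: arg_cong[where f="emeasure _"])
  also have "\<dots> = emeasure M1 A" using A M2.emeasure_pair_measure_Times[of A M1 "space M2"] M2.emeasure_space_1 by simp
  finally show "emeasure (distr (M1 \<Otimes>\<^sub>M M2) M1' fst) A = emeasure M1 A" .
qed

lemma distr_snd_pair:
  assumes "prob_space M1" "sets M2 = sets borel" "sets M2' = sets borel" "space M2 = UNIV" "space M2' = (UNIV::real set)"
    "sigma_finite_measure M2"
  shows "distr (M1 \<Otimes>\<^sub>M M2) M2' snd = M2"
proof (rule measure_eqI)
  interpret M1: prob_space M1 by fact
  interpret M2: sigma_finite_measure M2 by fact
  show "sets (distr (M1 \<Otimes>\<^sub>M M2) M2' snd) = sets M2" using assms by simp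
  fix A assume "A \<in> sets (distr (M1 \<Otimes>\<^sub>M M2) M2' snd)"
  then have A: "A \<in> sets M2" using assms by simp
  have fm: "snd \<in> measurable (M1 \<Otimes>\<^sub>M M2) M2'"
    using assms measurable_snd by (metis measurable_cong_sets)
  have "emeasure (distr (M1 \<Otimes>\<^sub>M M2) M2' snd) A = emeasure (M1 \<Otimes>\<^sub>M M2) (space M1 \<times> A)"
    using A assms by (subst emeasure_distr[OF fm]) (auto simp: space_pair_measure intro!: arg_cong[where f="emeasure _"])
  also have "\<dots> = emeasure M2 A" using A M2.emeasure_pair_measure_Times[of "space M1" M1 A] M1.emeasure_space_1 by simp
  finally show "emeasure (distr (M1 \<Otimes>\<^sub>M M2) M2' snd) A = emeasure M2 A" .
qed

lemma gauss_conv: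
  assumes \<rho>: "0 < \<rho>" and s: "0 < s" and \<sigma>: "0 < \<sigma>"
  shows "emeasure (Wd \<mu> \<sigma> \<Otimes>\<^sub>M std_normal) {p. \<rho> * fst p + s * snd p \<le> q}
       = ennreal (Phi ((q - \<rho> * \<mu>) / sqrt ((\<rho> * \<sigma>)\<^sup>2 + s\<^sup>2)))"
proof -
  let ?Q = "Wd \<mu> \<sigma> \<Otimes>\<^sub>M std_normal"
  interpret Q: prob_space ?Q by (intro prob_space_pair Wd_prob[OF \<sigma>] N_prob)
  have sfW: "sigma_finite_measure (Wd \<mu> \<sigma>)" using Wd_prob[OF \<sigma>] prob_space_imp_sigma_finite by blast
  have sfN: "sigma_finite_measure std_normal" using N_prob prob_space_imp_sigma_finite by blast
  have dfst: "distr ?Q M fst = Wd \<mu> \<sigma>" if "sets M = sets borel" "space M = UNIV" for M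
    using that by (intro distr_fst_pair N_prob sfW) auto
  have dsnd: "distr ?Q M snd = std_normal" if "sets M = sets borel" "space M = UNIV" for M
    using that by (intro distr_snd_pair Wd_prob[OF \<sigma>] sfN) auto
  have spQ: "space ?Q = UNIV" by (simp add: space_pair_measure)
  have setsQ: "sets ?Q = sets (borel \<Otimes>\<^sub>M borel)" by (intro sets_pair_measure_cong) auto
  have "measurable ?Q (Wd \<mu> \<sigma>) = measurable ?Q borel" by (rule measurable_cong_sets) simp_all
  then have fstm: "fst \<in> borel_measurable ?Q" using measurable_fst[of "Wd \<mu> \<sigma>" std_normal] by blast
  have "measurable ?Q std_normal = measurable ?Q borel" by (rule measurable_cong_sets) simp_all
  then have sndm: "snd \<in> borel_measurable ?Q" using measurable_snd[of "Wd \<mu> \<sigma>" std_normal] by blast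
  have d1: "distr ?Q borel fst = Wd \<mu> \<sigma>" by (rule dfst) simp_all
  have d2: "distr ?Q borel snd = std_normal" by (rule dsnd) simp_all
  have m: "(\<lambda>x. (fst x, snd x)) \<in> measurable ?Q (borel \<Otimes>\<^sub>M borel)"
    by (rule measurable_Pair[OF fstm sndm])
  have eqQ: "distr ?Q (borel \<Otimes>\<^sub>M borel) (\<lambda>x. (fst x, snd x)) = ?Q"
  proof (rule measure_eqI)
    show "sets (distr ?Q (borel \<Otimes>\<^sub>M borel) (\<lambda>x. (fst x, snd x))) = sets ?Q"
      using setsQ by (simp only: sets_distr)
    fix A assume "A \<in> sets (distr ?Q (borel \<Otimes>\<^sub>M borel) (\<lambda>x. (fst x, snd x)))"
    then have A: "A \<in> sets (borel \<Otimes>\<^sub>M borel)" by (simp only: sets_distr)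
    have pre: "(\<lambda>x. (fst x, snd x)) -` A \<inter> space ?Q = A" by (auto simp: spQ)
    show "emeasure (distr ?Q (borel \<Otimes>\<^sub>M borel) (\<lambda>x. (fst x, snd x))) A = emeasure ?Q A"
      by (simp only: emeasure_distr[OF m A] pre)
  qed
  have ind: "Q.indep_var borel fst borel snd"
    unfolding Q.indep_var_distribution_eq
    using fstm sndm d1 d2 eqQ by (simp only: simp_thms)
  have dX: "distributed ?Q lborel fst (normal_density \<mu> \<sigma>)"
  proof -
    have "distr ?Q lborel fst = Wd \<mu> \<sigma>" by (rule dfst) simp_all
    then show ?thesis unfolding distributed_def by (simp add: Wd_def)
  qed
  have dV: "distributed ?Q lborel snd std_normal_density"
  proof -
    have "distr ?Q lborel snd = std_normal" by (rule dsnd) simp_all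
    then show ?thesis unfolding distributed_def by (simp add: std_normal_def)
  qed
  have dX': "distributed ?Q lborel (\<lambda>x. 0 + \<rho> * fst x) (normal_density (0 + \<rho> * \<mu>) (\<bar>\<rho>\<bar> * \<sigma>))"
    using \<rho> \<sigma> by (intro Q.normal_density_affine dX) auto
  have dV': "distributed ?Q lborel (\<lambda>x. 0 + s * snd x) (normal_density (0 + s * 0) (\<bar>s\<bar> * 1))"
    using s by (intro Q.normal_density_affine dV) auto
  have ind': "Q.indep_var borel ((\<lambda>x. 0 + \<rho> * x) \<circ> fst) borel ((\<lambda>x. 0 + s * x) \<circ> snd)"
    by (rule Q.indep_var_compose[OF ind]) auto
  have sum: "distributed ?Q lborel (\<lambda>x. \<rho> * fst x + s * snd x) (normal_density (\<rho> * \<mu> + 0) (sqrt ((\<rho> * \<sigma>)\<^sup>2 + s\<^sup>2)))"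
    using Q.add_indep_normal[of "\<lambda>x. 0 + \<rho> * fst x" "\<lambda>x. 0 + s * snd x" "\<bar>\<rho>\<bar> * \<sigma>" "\<bar>s\<bar> * 1" "0 + \<rho> * \<mu>" "0 + s * 0"]
      ind' dX' dV' \<rho> s \<sigma> by (simp add: comp_def)
  define \<tau> where "\<tau> = sqrt ((\<rho> * \<sigma>)\<^sup>2 + s\<^sup>2)"
  have \<tau>: "0 < \<tau>" using s by (simp add: \<tau>_def add_nonneg_pos)
  have std: "distributed ?Q lborel (\<lambda>x. ((\<rho> * fst x + s * snd x) - \<rho> * \<mu>) / \<tau>) std_normal_density"
    using Q.normal_standard_normal_convert[OF \<tau>] sum by (simp add: \<tau>_def)
  have "(\<lambda>x. ((\<rho> * fst x + s * snd x) - \<rho> * \<mu>) / \<tau>) -` {..(q - \<rho> * \<mu>) / \<tau>} \<inter> space ?Q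
      = {p. \<rho> * fst p + s * snd p \<le> q}"
    using \<tau> by (auto simp: spQ divide_le_cancel)
  with std_emeasure[OF std, of "(q - \<rho> * \<mu>) / \<tau>"] show ?thesis by (simp add: \<tau>_def)
qed


definition Ev :: "nat \<Rightarrow> nat \<Rightarrow> real \<Rightarrow> real \<Rightarrow> (nat \<Rightarrow> real \<times> real) set" where
  "Ev n m \<alpha> \<rho> = {\<omega> \<in> space (sample_space n).
        \<exists>i<n. card {j \<in> {..<n}. Zval (\<omega> j) < Zval (\<omega> i)} < m
              \<and> Phi (Xval \<rho> (\<omega> i)) \<le> \<alpha>}"

lemma p_Ev: "p_success_G n m \<alpha> \<rho> = measure (sample_space n) (Ev n m \<alpha> \<rho>)"
  by (simp add: p_success_G_def Ev_def)

lemma card_sum: fixes n :: nat shows "real (card {j \<in> {..<n}. P j}) = (\<Sum>j<n. if P j then 1 else 0)"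
proof -
  have "(\<Sum>j<n. if P j then 1 else 0 :: real) = (\<Sum>j\<in>{j\<in>{..<n}. P j}. 1)"
    by (rule sum.inter_filter[symmetric]) simp
  then show ?thesis by simp
qed

lemma Phi_meas: "Phi \<in> borel_measurable borel"
  by (rule borel_measurable_mono) (auto simp: mono_def Phi_mono)

lemma Ev_sets: "Ev n m \<alpha> \<rho> \<in> sets (sample_space n)"
proof -
  let ?S = "space (sample_space n)"
  define C where "C i = {\<omega> \<in> ?S. real (card {j \<in> {..<n}. fst (\<omega> j) < fst (\<omega> i)}) < real m}" for i
  define D where "D i = {\<omega> \<in> ?S. Phi (Xval \<rho> (\<omega> i)) \<le> \<alpha>}" for i
  have eq: "Ev n m \<alpha> \<rho> = (\<Union>i\<in>{..<n}. C i \<inter> D i)"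
    by (auto simp: Ev_def C_def D_def Zval_def)
  have Cs: "C i \<in> sets (sample_space n)" if i: "i < n" for i
  proof -
    have "(\<lambda>\<omega>. (\<Sum>j<n. if fst (\<omega> j) < fst (\<omega> i) then 1 else 0 :: real)) \<in> borel_measurable (sample_space n)"
    proof (rule borel_measurable_sum)
      fix j assume "j \<in> {..<n}"
      then have j: "j < n" by simp
      note [measurable] = fst_meas[OF j] fst_meas[OF i]
      show "(\<lambda>\<omega>. if fst (\<omega> j) < fst (\<omega> i) then 1 else 0 :: real) \<in> borel_measurable (sample_space n)"
        by measurable
    qed
    then have "(\<lambda>\<omega>. real (card {j \<in> {..<n}. fst (\<omega> j) < fst (\<omega> i)})) \<in> borel_measurable (sample_space n)"
      by (simp only: card_sum)
    then show ?thesis unfolding C_def by measurable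
  qed
  have Ds: "D i \<in> sets (sample_space n)" if i: "i < n" for i
  proof -
    note [measurable] = fst_meas[OF i] snd_meas[OF i] Phi_meas
    have "(\<lambda>\<omega>. Phi (Xval \<rho> (\<omega> i))) \<in> borel_measurable (sample_space n)"
      unfolding Xval_def by measurable
    then show ?thesis unfolding D_def by measurable
  qed
  show ?thesis unfolding eq using Cs Ds by (intro sets.finite_UN) auto
qed

lemma mono_m: assumes "1 \<le> m" shows "p_success_G n 1 \<alpha> \<rho> \<le> p_success_G n m \<alpha> \<rho>"
proof -
  interpret S: prob_space "sample_space n" by (rule sample_prob)
  have "Ev n 1 \<alpha> \<rho> \<subseteq> Ev n m \<alpha> \<rho>"
  proof
    fix \<omega> assume "\<omega> \<in> Ev n 1 \<alpha> \<rho>"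
    then obtain i where i: "\<omega> \<in> space (sample_space n)" "i < n"
      "card {j \<in> {..<n}. Zval (\<omega> j) < Zval (\<omega> i)} < 1" "Phi (Xval \<rho> (\<omega> i)) \<le> \<alpha>"
      unfolding Ev_def by blast
    then have "card {j \<in> {..<n}. Zval (\<omega> j) < Zval (\<omega> i)} < m" using assms by linarith
    then show "\<omega> \<in> Ev n m \<alpha> \<rho>" using i unfolding Ev_def by blast
  qed
  then show ?thesis unfolding p_Ev using Ev_sets by (rule S.finite_measure_mono)
qed

lemma card_istar: assumes "1 \<le> n" shows "card {j \<in> {..<n}. Zval (\<omega> j) < Zval (\<omega> (istar n \<omega>))} = 0"
proof -
  have "{j \<in> {..<n}. Zval (\<omega> j) < Zval (\<omega> (istar n \<omega>))} = {}"
    using Ym_le[OF assms, of _ \<omega>] by (force simp: Zval_def Ym_def)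
  then show ?thesis by simp
qed

lemma sub_Ev:
  assumes n: "1 \<le> n" and q: "Phi q = \<alpha>"
  shows "{\<omega> \<in> space (sample_space n). \<rho> * Ym n \<omega> + sqrt (1 - \<rho>\<^sup>2) * Vs n \<omega> \<le> q} \<subseteq> Ev n 1 \<alpha> \<rho>"
proof
  fix \<omega> assume w: "\<omega> \<in> {\<omega> \<in> space (sample_space n). \<rho> * Ym n \<omega> + sqrt (1 - \<rho>\<^sup>2) * Vs n \<omega> \<le> q}"
  have "Xval \<rho> (\<omega> (istar n \<omega>)) = \<rho> * Ym n \<omega> + sqrt (1 - \<rho>\<^sup>2) * Vs n \<omega>"
    by (simp add: Xval_def Ym_def Vs_def)
  then have "Phi (Xval \<rho> (\<omega> (istar n \<omega>))) \<le> \<alpha>" using w q Phi_mono by auto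
  then show "\<omega> \<in> Ev n 1 \<alpha> \<rho>" using w istar_lt[OF n, of \<omega>] card_istar[OF n, of \<omega>]
    unfolding Ev_def by auto
qed

lemma Ev_full: assumes n: "1 \<le> n" shows "Ev n 1 1 \<rho> = space (sample_space n)"
proof -
  have "\<omega> \<in> Ev n 1 1 \<rho>" if "\<omega> \<in> space (sample_space n)" for \<omega>
    using that istar_lt[OF n, of \<omega>] card_istar[OF n, of \<omega>] Phi_le1 unfolding Ev_def by auto
  then show ?thesis by (auto simp: Ev_def)
qed

lemma main_bound:
  assumes n: "1 \<le> n" and \<rho>: "0 < \<rho>" "\<rho> \<le> 1" and \<alpha>: "0 < \<alpha>" "\<alpha> < 1" and S2: "0 < S2"
    and dom: "\<And>t. Phi ((t - \<mu>) / sqrt S2) \<le> 1 - (1 - Phi t) ^ n"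
  shows "Phi ((Phi_inv \<alpha> - \<rho> * \<mu>) / sqrt (1 - \<rho>\<^sup>2 + \<rho>\<^sup>2 * S2)) \<le> p_success_G n 1 \<alpha> \<rho>"
proof -
  interpret S: prob_space "sample_space n" by (rule sample_prob)
  define q where "q = Phi_inv \<alpha>"
  have q: "Phi q = \<alpha>" using Phi_Phi_inv[OF \<alpha>] by (simp add: q_def)
  define \<sigma> where "\<sigma> = sqrt S2"
  have \<sigma>: "0 < \<sigma>" "\<sigma>\<^sup>2 = S2" using S2 by (auto simp: \<sigma>_def)
  define s where "s = sqrt (1 - \<rho>\<^sup>2)"
  have s0: "0 \<le> s" using \<rho> by (simp add: s_def power_le_one)
  let ?S = "space (sample_space n)"
  define G where "G = {\<omega> \<in> ?S. \<rho> * Ym n \<omega> + s * Vs n \<omega> \<le> q}"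
  have GE: "G \<subseteq> Ev n 1 \<alpha> \<rho>" unfolding G_def s_def by (rule sub_Ev[OF n q])
  have pm: "(\<lambda>\<omega>. (Ym n \<omega>, Vs n \<omega>)) \<in> measurable (sample_space n) (borel \<Otimes>\<^sub>M borel)"
    using Ym_meas[OF n] Vs_meas[OF n] by (intro measurable_Pair)
  define H where "H = {p :: real \<times> real. \<rho> * fst p + s * snd p \<le> q}"
  have "{p \<in> space (borel \<Otimes>\<^sub>M borel). \<rho> * fst p + s * snd p \<le> q} \<in> sets (borel \<Otimes>\<^sub>M borel)"
    by measurable
  then have Hs: "H \<in> sets (borel \<Otimes>\<^sub>M borel)" unfolding H_def by (simp add: space_pair_measure)
  have GH: "G = (\<lambda>\<omega>. (Ym n \<omega>, Vs n \<omega>)) -` H \<inter> ?S" by (auto simp: G_def H_def)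
  interpret DN: pair_sigma_finite "DY n" std_normal
    by (intro pair_sigma_finite.intro prob_space_imp_sigma_finite DY_prob[OF n] N_prob)
  interpret WN: pair_sigma_finite "Wd \<mu> \<sigma>" std_normal
    by (intro pair_sigma_finite.intro prob_space_imp_sigma_finite Wd_prob[OF \<sigma>(1)] N_prob)
  have Hs1: "H \<in> sets (DY n \<Otimes>\<^sub>M std_normal)" using Hs by (simp add: DY_def cong: sets_pair_measure_cong)
  have Hs2: "H \<in> sets (Wd \<mu> \<sigma> \<Otimes>\<^sub>M std_normal)" using Hs by (simp cong: sets_pair_measure_cong)
  have slice: "(\<lambda>y. (y, v)) -` H = {..(q - s * v) / \<rho>}" for v
    using \<rho> by (auto simp: H_def field_simps)
  have "emeasure (sample_space n) G = emeasure (DY n \<Otimes>\<^sub>M std_normal) H"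
    unfolding GH joint_distr[OF n, symmetric] using Hs by (rule emeasure_distr[OF pm, symmetric])
  also have "\<dots> = (\<integral>\<^sup>+ v. emeasure (DY n) {..(q - s * v) / \<rho>} \<partial>std_normal)"
    using DN.emeasure_pair_measure_alt2[OF Hs1] by (simp add: slice)
  also have "\<dots> \<ge> (\<integral>\<^sup>+ v. emeasure (Wd \<mu> \<sigma>) {..(q - s * v) / \<rho>} \<partial>std_normal)"
  proof (rule nn_integral_mono)
    fix v
    show "emeasure (Wd \<mu> \<sigma>) {..(q - s * v) / \<rho>} \<le> emeasure (DY n) {..(q - s * v) / \<rho>}"
    proof -
      have "Phi (((q - s * v) / \<rho> - \<mu>) / \<sigma>) \<le> 1 - (1 - Phi ((q - s * v) / \<rho>)) ^ n"
        using dom[of "(q - s * v) / \<rho>"] by (simp add: \<sigma>_def)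
      then show ?thesis by (simp add: Wd_cdf[OF \<sigma>(1)] DY_cdf[OF n] ennreal_leI)
    qed
  qed
  also have "(\<integral>\<^sup>+ v. emeasure (Wd \<mu> \<sigma>) {..(q - s * v) / \<rho>} \<partial>std_normal) = emeasure (Wd \<mu> \<sigma> \<Otimes>\<^sub>M std_normal) H"
    using WN.emeasure_pair_measure_alt2[OF Hs2] by (simp add: slice)
  also have "\<dots> = ennreal (Phi ((q - \<rho> * \<mu>) / sqrt ((\<rho> * \<sigma>)\<^sup>2 + s\<^sup>2)))"
  proof (cases "\<rho> = 1")
    case True
    then have s: "s = 0" by (simp add: s_def)
    have "H = {..q} \<times> UNIV" using True s by (auto simp: H_def)
    then have "emeasure (Wd \<mu> \<sigma> \<Otimes>\<^sub>M std_normal) H = emeasure (Wd \<mu> \<sigma>) {..q}"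
      using N.emeasure_pair_measure_Times[of "{..q}" "Wd \<mu> \<sigma>" UNIV] N.emeasure_space_1 by simp
    also have "\<dots> = ennreal (Phi ((q - \<mu>) / \<sigma>))" by (rule Wd_cdf[OF \<sigma>(1)])
    finally show ?thesis using True s \<sigma> by (simp add: \<sigma>_def)
  next
    case False
    then have "0 < s" using \<rho> by (simp add: s_def abs_square_less_1)
    then show ?thesis unfolding H_def by (rule gauss_conv[OF \<rho>(1) _ \<sigma>(1)])
  qed
  finally have "ennreal (Phi ((q - \<rho> * \<mu>) / sqrt ((\<rho> * \<sigma>)\<^sup>2 + s\<^sup>2))) \<le> emeasure (sample_space n) G" .
  then have "Phi ((q - \<rho> * \<mu>) / sqrt ((\<rho> * \<sigma>)\<^sup>2 + s\<^sup>2)) \<le> measure (sample_space n) G"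
    by (simp add: S.emeasure_eq_measure Phi_nonneg)
  also have "\<dots> \<le> measure (sample_space n) (Ev n 1 \<alpha> \<rho>)"
    using GE Ev_sets by (rule S.finite_measure_mono)
  also have "(\<rho> * \<sigma>)\<^sup>2 + s\<^sup>2 = 1 - \<rho>\<^sup>2 + \<rho>\<^sup>2 * S2"
    using \<sigma> \<rho> by (simp add: s_def power_mult_distrib power_le_one)
  finally show ?thesis by (simp add: p_Ev q_def)
qed


lemma part1:
  assumes th: "0 < \<theta>" "\<theta> < pi/2"
  shows "\<exists>n0::nat. \<forall>n\<ge>n0. \<forall>m\<in>{1..n}. \<forall>\<rho>\<in>{0<..1}. \<forall>\<alpha>\<in>{0<..1}.
              p_success_G n 1 \<alpha> \<rho> \<le> p_success_G n m \<alpha> \<rho> \<and>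
              gauss_bound n \<theta> \<alpha> \<rho> \<le> p_success_G n 1 \<alpha> \<rho>"
proof -
  obtain N where N: "\<And>n. n \<ge> N \<Longrightarrow> 0 < sigma2_n n \<theta> \<and> (\<forall>t. Phi ((t - mu_n n \<theta>) / sqrt (sigma2_n n \<theta>)) \<le> 1 - (1 - Phi t) ^ n)"
    using dom_eventually[OF th] by blast
  show ?thesis
  proof (intro exI[of _ "max N 1"] allI impI ballI conjI)
    fix n m \<rho> \<alpha> assume n: "max N 1 \<le> n" and m: "m \<in> {1..n}" and \<rho>: "\<rho> \<in> {0<..(1::real)}" and \<alpha>: "\<alpha> \<in> {0<..(1::real)}"
    show "p_success_G n 1 \<alpha> \<rho> \<le> p_success_G n m \<alpha> \<rho>" using m by (intro mono_m) auto
    have n1: "1 \<le> n" using n by simp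
    show "gauss_bound n \<theta> \<alpha> \<rho> \<le> p_success_G n 1 \<alpha> \<rho>"
    proof (cases "\<alpha> \<ge> 1")
      case True
      then have a1: "\<alpha> = 1" using \<alpha> by simp
      interpret S: prob_space "sample_space n" by (rule sample_prob)
      have "p_success_G n 1 \<alpha> \<rho> = 1" using Ev_full[OF n1] a1 by (simp add: p_Ev S.prob_space)
      then show ?thesis using True by (simp add: gauss_bound_def)
    next
      case False
      have NN: "0 < sigma2_n n \<theta>" "\<And>t. Phi ((t - mu_n n \<theta>) / sqrt (sigma2_n n \<theta>)) \<le> 1 - (1 - Phi t) ^ n"
        using N[of n] n by auto
      show ?thesis using False main_bound[OF n1 _ _ _ _ NN(1) NN(2)] \<rho> \<alpha>
        by (simp add: gauss_bound_def)
    qed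
  qed
qed

theorem mainTheorem7:
  shows "(\<forall>\<theta>. 0 < \<theta> \<and> \<theta> < pi/2 \<longrightarrow> (\<exists>n0::nat.
            \<forall>n\<ge>n0. \<forall>m\<in>{1..n}. \<forall>\<rho>\<in>{0<..1}. \<forall>\<alpha>\<in>{0<..1}.
              p_success_G n 1 \<alpha> \<rho> \<le> p_success_G n m \<alpha> \<rho> \<and>
              gauss_bound n \<theta> \<alpha> \<rho> \<le> p_success_G n 1 \<alpha> \<rho>))
       \<and> (\<forall>n::nat. \<forall>m\<in>{1..n}. \<forall>\<rho>\<in>{0<..1}. \<forall>\<alpha>\<in>{0<..1}.
              p_success_G n 1 \<alpha> \<rho> \<le> p_success_G n m \<alpha> \<rho> \<and>
              (SUP \<theta>\<in>Theta_n n. ereal (gauss_bound n \<theta> \<alpha> \<rho>))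
                \<le> ereal (p_success_G n 1 \<alpha> \<rho>))"
proof (intro conjI allI impI ballI)
  fix \<theta> :: real assume "0 < \<theta> \<and> \<theta> < pi/2"
  then show "\<exists>n0::nat. \<forall>n\<ge>n0. \<forall>m\<in>{1..n}. \<forall>\<rho>\<in>{0<..1}. \<forall>\<alpha>\<in>{0<..1}.
              p_success_G n 1 \<alpha> \<rho> \<le> p_success_G n m \<alpha> \<rho> \<and>
              gauss_bound n \<theta> \<alpha> \<rho> \<le> p_success_G n 1 \<alpha> \<rho>"
    using part1 by blast
next
  fix n m :: nat and \<rho> \<alpha> :: real assume m: "m \<in> {1..n}" and \<rho>: "\<rho> \<in> {0<..1}" and \<alpha>: "\<alpha> \<in> {0<..1}"
  show "p_success_G n 1 \<alpha> \<rho> \<le> p_success_G n m \<alpha> \<rho>" using m by (intro mono_m) auto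
  show "(SUP \<theta>\<in>Theta_n n. ereal (gauss_bound n \<theta> \<alpha> \<rho>)) \<le> ereal (p_success_G n 1 \<alpha> \<rho>)"
  proof (rule SUP_least)
    fix \<theta> assume "\<theta> \<in> Theta_n n"
    then have th: "0 < \<theta>" "\<theta> < pi/2" and nn: "n_star \<theta> \<le> n" by (auto simp: Theta_n_def)
    have "\<exists>n0. good_threshold \<theta> n0" using part1[OF th] by (simp add: good_threshold_def)
    then have "good_threshold \<theta> (n_star \<theta>)" unfolding n_star_def by (rule LeastI_ex)
    then have "gauss_bound n \<theta> \<alpha> \<rho> \<le> p_success_G n 1 \<alpha> \<rho>"
      using nn m \<rho> \<alpha> unfolding good_threshold_def by blast
    then show "ereal (gauss_bound n \<theta> \<alpha> \<rho>) \<le> ereal (p_success_G n 1 \<alpha> \<rho>)" by simp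
  qed
qed


end
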